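(* If a nested sequent $\Gamma$ is derivable in $\mathsf{N.IntCK}\cup\{\mathsf{cut}\}$, then $\Gamma$ is derivable in $\mathsf{N.IntCK}$.
   Context: Language $\mathcal{L}$: formulas $\varphi ::= p \mid \bot \mid \varphi\wedge\varphi \mid \varphi\vee\varphi \mid \varphi\to\varphi \mid \varphi \mathrel{\Box\!\!\to} \varphi \mid \varphi \mathrel{\Diamond\!\!\to}\varphi$. Nested sequents: each formula $\varphi$ gets an input polarity $\varphi^\bullet$ or output polarity $\varphi^\circ$. Input sequents $\Lambda ::= \emptyset \mid \Lambda,\varphi^\bullet \mid \Lambda,[\psi:\Lambda]$ and nested sequents $\Gamma ::= \Lambda,\varphi^\circ \mid \Lambda,[\psi:\Gamma]$, where the index $\psi$ of a component $[\psi:\cdot]$ is an unpolarised formula; a nested sequent contains exactly one output formula (commas are associative and commutative). A context $\Gamma\{\ \}$ is a sequent with one hole $\{\ \}$ (possibly inside nested components), to be filled with a sequent; rules are applied only when premisses and conclusion are nested sequents. $\Gamma^{\downarrow}\{\ \}$ denotes $\Gamma\{\ \}$ with its output formula removed. Rules of $\mathsf{N.IntCK}$ (premisses / conclusion): init: $\Gamma\{p^\bullet,p^\circ\}$ ($p$ atom, no premiss); $\bot^\bullet$: $\Gamma\{\bot^\bullet\}$ (no premiss); $\wedge^\bullet$: $\Gamma\{\varphi^\bullet,\psi^\bullet\}$ / $\Gamma\{(\varphi\wedge\psi)^\bullet\}$; $\wedge^\circ$: $\Gamma\{\varphi^\circ\}$, $\Gamma\{\psi^\circ\}$ / $\Gamma\{(\varphi\wedge\psi)^\circ\}$;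 $\vee^\bullet$: $\Gamma\{\varphi^\bullet\}$, $\Gamma\{\psi^\bullet\}$ / $\Gamma\{(\varphi\vee\psi)^\bullet\}$; $\vee^\circ$: $\Gamma\{\varphi^\circ\}$ / $\Gamma\{(\varphi\vee\psi)^\circ\}$ and $\Gamma\{\psi^\circ\}$ / $\Gamma\{(\varphi\vee\psi)^\circ\}$; $\to^\bullet$: $\Gamma^\downarrow\{(\varphi\to\psi)^\bullet,\varphi^\circ\}$, $\Gamma\{\psi^\bullet\}$ / $\Gamma\{(\varphi\to\psi)^\bullet\}$; $\to^\circ$: $\Gamma\{\varphi^\bullet,\psi^\circ\}$ / $\Gamma\{(\varphi\to\psi)^\circ\}$; $\Box^\bullet$: $\varphi^\bullet,\eta^\circ$ and $\eta^\bullet,\varphi^\circ$ and $\Gamma\{(\varphi\mathrel{\Box\!\!\to}\psi)^\bullet,[\eta:\psi^\bullet,\Delta]\}$ / $\Gamma\{(\varphi\mathrel{\Box\!\!\to}\psi)^\bullet,[\eta:\Delta]\}$; $\Box^\circ$: $\Gamma\{[\varphi:\psi^\circ]\}$ / $\Gamma\{(\varphi\mathrel{\Box\!\!\to}\psi)^\circ\}$; $\Diamond^\bullet$: $\Gamma\{[\varphi:\psi^\bullet]\}$ / $\Gamma\{(\varphi\mathrel{\Diamond\!\!\to}\psi)^\bullet\}$; $\Diamond^\circ$: $\varphi^\bullet,\eta^\circ$ and $\eta^\bullet,\varphi^\circ$ and $\Gamma\{[\eta:\psi^\circ,\Delta]\}$ / $\Gamma\{(\varphi\mathrel{\Diamond\!\!\to}\psi)^\circ,[\eta:\Delta]\}$.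 A derivation is a finite tree of rule instances whose leaves are instances of init or $\bot^\bullet$. The cut rule $\mathsf{cut}$: from premisses $\Gamma^{\downarrow}\{\xi^\circ\}$ and $\Gamma\{\xi^\bullet\}$ infer $\Gamma\{\emptyset\}$ (the hole filled with the empty sequent), for any formula $\xi$ and context $\Gamma\{\ \}$ for which these are nested sequents. *)

theory Defs
  imports Main "HOL-Library.Multiset"
begin

datatype 'a fm =
    Atom 'a
  | Bot
  | Conj "'a fm" "'a fm"
  | Disj "'a fm" "'a fm"
  | Imp "'a fm" "'a fm"
  | BoxArr "'a fm" "'a fm"
  | DiaArr "'a fm" "'a fm"

text \<open>A (possibly ill-formed) sequent is a multiset of items; commas are thereby
associative and commutative.  An item is an input formula, an output formula,
or a component [psi : S] with unpolarised index psi.\<close>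

datatype 'a item =
    In "'a fm"
  | Out "'a fm"
  | Comp "'a fm" "'a item multiset"

type_synonym 'a seq = "'a item multiset"

primrec outs_item :: "'a item \<Rightarrow> nat" where
  "outs_item (In \<phi>) = 0"
| "outs_item (Out \<phi>) = 1"
| "outs_item (Comp \<psi> S) = sum_mset (image_mset outs_item S)"

definition outs :: "'a seq \<Rightarrow> nat" where
  "outs S = sum_mset (image_mset outs_item S)"

text \<open>By the grammar, a nested sequent is exactly a sequent containing exactly one
output formula (input sequents are those with none).\<close>
definition is_nested :: "'a seq \<Rightarrow> bool" where
  "is_nested S \<longleftrightarrow> outs S = 1"

fun is_out :: "'a item \<Rightarrow> bool" where
  "is_out (Out \<phi>) = True"
| "is_out _ = False"

primrec strip_item :: "'a item \<Rightarrow> 'a item" where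
  "strip_item (In \<phi>) = In \<phi>"
| "strip_item (Out \<phi>) = Out \<phi>"
| "strip_item (Comp \<psi> S) = Comp \<psi> (filter_mset (\<lambda>x. \<not> is_out x) (image_mset strip_item S))"

definition strip :: "'a seq \<Rightarrow> 'a seq" where
  "strip S = filter_mset (\<lambda>x. \<not> is_out x) (image_mset strip_item S)"

text \<open>A context is a sequent with exactly one hole, possibly inside nested
components: either  Delta, {}  or  Delta, [psi : C].\<close>
datatype 'a ctx =
    Top "'a seq"
  | Nest "'a seq" "'a fm" "'a ctx"

primrec fill :: "'a ctx \<Rightarrow> 'a seq \<Rightarrow> 'a seq" where
  "fill (Top \<Delta>) X = \<Delta> + X"
| "fill (Nest \<Delta> \<psi> C) X = \<Delta> + {# Comp \<psi> (fill C X) #}"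

primrec down :: "'a ctx \<Rightarrow> 'a ctx" where
  "down (Top \<Delta>) = Top (strip \<Delta>)"
| "down (Nest \<Delta> \<psi> C) = Nest (strip \<Delta>) \<psi> (down C)"

text \<open>derivable c S: S is derivable in N.IntCK, plus the cut rule if c = True.
Every rule instance requires premisses and conclusion to be nested sequents.\<close>

inductive derivable :: "bool \<Rightarrow> 'a seq \<Rightarrow> bool" for c :: bool where
  init:
    "is_nested (fill G {# In (Atom p), Out (Atom p) #})
     \<Longrightarrow> derivable c (fill G {# In (Atom p), Out (Atom p) #})"
| botL:
    "is_nested (fill G {# In Bot #}) \<Longrightarrow> derivable c (fill G {# In Bot #})"
| conjL:
    "\<lbrakk> derivable c (fill G {# In \<phi>, In \<psi> #});
       is_nested (fill G {# In \<phi>, In \<psi> #});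
       is_nested (fill G {# In (Conj \<phi> \<psi>) #}) \<rbrakk>
     \<Longrightarrow> derivable c (fill G {# In (Conj \<phi> \<psi>) #})"
| conjR:
    "\<lbrakk> derivable c (fill G {# Out \<phi> #}); derivable c (fill G {# Out \<psi> #});
       is_nested (fill G {# Out \<phi> #}); is_nested (fill G {# Out \<psi> #});
       is_nested (fill G {# Out (Conj \<phi> \<psi>) #}) \<rbrakk>
     \<Longrightarrow> derivable c (fill G {# Out (Conj \<phi> \<psi>) #})"
| disjL:
    "\<lbrakk> derivable c (fill G {# In \<phi> #}); derivable c (fill G {# In \<psi> #});
       is_nested (fill G {# In \<phi> #}); is_nested (fill G {# In \<psi> #});
       is_nested (fill G {# In (Disj \<phi> \<psi>) #}) \<rbrakk>
     \<Longrightarrow> derivable c (fill G {# In (Disj \<phi> \<psi>) #})"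
| disjR1:
    "\<lbrakk> derivable c (fill G {# Out \<phi> #});
       is_nested (fill G {# Out \<phi> #});
       is_nested (fill G {# Out (Disj \<phi> \<psi>) #}) \<rbrakk>
     \<Longrightarrow> derivable c (fill G {# Out (Disj \<phi> \<psi>) #})"
| disjR2:
    "\<lbrakk> derivable c (fill G {# Out \<psi> #});
       is_nested (fill G {# Out \<psi> #});
       is_nested (fill G {# Out (Disj \<phi> \<psi>) #}) \<rbrakk>
     \<Longrightarrow> derivable c (fill G {# Out (Disj \<phi> \<psi>) #})"
| impL:
    "\<lbrakk> derivable c (fill (down G) {# In (Imp \<phi> \<psi>), Out \<phi> #});
       derivable c (fill G {# In \<psi> #});
       is_nested (fill (down G) {# In (Imp \<phi> \<psi>), Out \<phi> #});
       is_nested (fill G {# In \<psi> #});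
       is_nested (fill G {# In (Imp \<phi> \<psi>) #}) \<rbrakk>
     \<Longrightarrow> derivable c (fill G {# In (Imp \<phi> \<psi>) #})"
| impR:
    "\<lbrakk> derivable c (fill G {# In \<phi>, Out \<psi> #});
       is_nested (fill G {# In \<phi>, Out \<psi> #});
       is_nested (fill G {# Out (Imp \<phi> \<psi>) #}) \<rbrakk>
     \<Longrightarrow> derivable c (fill G {# Out (Imp \<phi> \<psi>) #})"
| boxL:
    "\<lbrakk> derivable c {# In \<phi>, Out \<eta> #}; derivable c {# In \<eta>, Out \<phi> #};
       derivable c (fill G {# In (BoxArr \<phi> \<psi>), Comp \<eta> ({# In \<psi> #} + \<Delta>) #});
       is_nested (fill G {# In (BoxArr \<phi> \<psi>), Comp \<eta> ({# In \<psi> #} + \<Delta>) #});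
       is_nested (fill G {# In (BoxArr \<phi> \<psi>), Comp \<eta> \<Delta> #}) \<rbrakk>
     \<Longrightarrow> derivable c (fill G {# In (BoxArr \<phi> \<psi>), Comp \<eta> \<Delta> #})"
| boxR:
    "\<lbrakk> derivable c (fill G {# Comp \<phi> {# Out \<psi> #} #});
       is_nested (fill G {# Comp \<phi> {# Out \<psi> #} #});
       is_nested (fill G {# Out (BoxArr \<phi> \<psi>) #}) \<rbrakk>
     \<Longrightarrow> derivable c (fill G {# Out (BoxArr \<phi> \<psi>) #})"
| diaL:
    "\<lbrakk> derivable c (fill G {# Comp \<phi> {# In \<psi> #} #});
       is_nested (fill G {# Comp \<phi> {# In \<psi> #} #});
       is_nested (fill G {# In (DiaArr \<phi> \<psi>) #}) \<rbrakk>
     \<Longrightarrow> derivable c (fill G {# In (DiaArr \<phi> \<psi>) #})"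
| diaR:
    "\<lbrakk> derivable c {# In \<phi>, Out \<eta> #}; derivable c {# In \<eta>, Out \<phi> #};
       derivable c (fill G {# Comp \<eta> ({# Out \<psi> #} + \<Delta>) #});
       is_nested (fill G {# Comp \<eta> ({# Out \<psi> #} + \<Delta>) #});
       is_nested (fill G {# Out (DiaArr \<phi> \<psi>), Comp \<eta> \<Delta> #}) \<rbrakk>
     \<Longrightarrow> derivable c (fill G {# Out (DiaArr \<phi> \<psi>), Comp \<eta> \<Delta> #})"
| cut:
    "\<lbrakk> c; derivable c (fill (down G) {# Out \<xi> #}); derivable c (fill G {# In \<xi> #});
       is_nested (fill (down G) {# Out \<xi> #}); is_nested (fill G {# In \<xi> #});
       is_nested (fill G {#}) \<rbrakk>
     \<Longrightarrow> derivable c (fill G {#})"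

end

theory Submission
  imports Defs
begin


lemma strip_item_Comp[simp]: "strip_item (Comp \<psi> S) = Comp \<psi> (strip S)"
  by (simp add: strip_def)
declare strip_item.simps(3)[simp del]
lemma outs_item_Comp[simp]: "outs_item (Comp \<psi> S) = outs S" by (simp add: outs_def)
declare outs_item.simps(3)[simp del]

lemma is_out_strip_item[simp]: "is_out (strip_item x) = is_out x"
  by (cases x) (auto)

lemma strip_empty[simp]: "strip {#} = {#}" by (simp add: strip_def)
lemma strip_plus[simp]: "strip (A + B) = strip A + strip B" by (simp add: strip_def)
lemma strip_add[simp]: "strip (add_mset x A) = (if is_out x then strip A else add_mset (strip_item x) (strip A))"
  by (simp add: strip_def)
lemma strip_In[simp]: "strip_item (In a) = In a" by simp


lemma strip_strip_aux: "strip_item (strip_item x) = strip_item x"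
proof (induction x)
  case (Comp \<psi> S)
  have "strip (strip S) = strip S"
    using Comp by (induction S) auto
  then show ?case by simp
qed auto

lemma strip_strip[simp]: "strip (strip S) = strip S"
  by (induction S) (auto simp: strip_strip_aux)

lemma strip_item_strip_item[simp]: "strip_item (strip_item x) = strip_item x"
  by (rule strip_strip_aux)

lemma outs_empty[simp]: "outs {#} = 0" by (simp add: outs_def)
lemma outs_plus[simp]: "outs (A + B) = outs A + outs B" by (simp add: outs_def)
lemma outs_add[simp]: "outs (add_mset x A) = outs_item x + outs A" by (simp add: outs_def)

lemma outs_strip_aux: "\<not> is_out x \<Longrightarrow> outs_item (strip_item x) = 0"
proof (induction x)
  case (Comp \<psi> S)
  have "outs (strip S) = 0"
    using Comp by (induction S) (auto)
  then show ?case by simp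
qed auto

lemma outs_strip[simp]: "outs (strip S) = 0"
  by (induction S) (auto simp: outs_strip_aux)

lemma outs0_item_strip: "outs_item x = 0 \<Longrightarrow> strip_item x = x"
proof (induction x)
  case (Comp \<psi> S)
  have "strip S = S"
    using Comp by (induction S) (auto split: if_splits, case_tac x, auto)
  then show ?case by simp
next
  case (Out x) then show ?case by simp
qed auto

lemma outs0_strip: "outs S = 0 \<Longrightarrow> strip S = S"
proof (induction S)
  case (add x S)
  then have "strip_item x = x" "outs S = 0" "outs_item x = 0" by (auto intro: outs0_item_strip)
  moreover have "\<not> is_out x" using \<open>outs_item x = 0\<close> by (cases x) auto
  ultimately show ?case using add by simp
qed simp

primrec topadd :: "'a ctx \<Rightarrow> 'a seq \<Rightarrow> 'a ctx" where
  "topadd (Top \<Delta>) M = Top (\<Delta> + M)"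
| "topadd (Nest \<Delta> \<psi> C) M = Nest (\<Delta> + M) \<psi> C"

primrec ext :: "'a ctx \<Rightarrow> 'a seq \<Rightarrow> 'a ctx" where
  "ext (Top \<Delta>) M = Top (\<Delta> + M)"
| "ext (Nest \<Delta> \<psi> C) M = Nest \<Delta> \<psi> (ext C M)"

primrec comp :: "'a ctx \<Rightarrow> 'a ctx \<Rightarrow> 'a ctx" where
  "comp (Top \<Delta>) K = topadd K \<Delta>"
| "comp (Nest \<Delta> \<psi> C) K = Nest \<Delta> \<psi> (comp C K)"

primrec hl :: "'a ctx \<Rightarrow> 'a seq" where
  "hl (Top \<Delta>) = \<Delta>"
| "hl (Nest \<Delta> \<psi> C) = hl C"

primrec octx :: "'a ctx \<Rightarrow> nat" where
  "octx (Top \<Delta>) = outs \<Delta>"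
| "octx (Nest \<Delta> \<psi> C) = outs \<Delta> + octx C"

lemma fill_topadd[simp]: "fill (topadd K M) X = fill K X + M"
  by (cases K) (auto simp: ac_simps)
lemma fill_ext[simp]: "fill (ext K M) X = fill K (M + X)"
  by (induction K) (auto simp: ac_simps)
lemma fill_comp[simp]: "fill (comp C K) X = fill C (fill K X)"
  by (induction C) (auto simp: ac_simps)
lemma topadd_empty[simp]: "topadd K {#} = K" by (cases K) auto
lemma ext_empty[simp]: "ext K {#} = K" by (induction K) auto
lemma ext_ext[simp]: "ext (ext K A) B = ext K (A + B)" by (induction K) (auto simp: ac_simps)
lemma topadd_topadd[simp]: "topadd (topadd K A) B = topadd K (A + B)" by (cases K) (auto simp: ac_simps)

lemma outs_fill[simp]: "outs (fill K X) = octx K + outs X"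
  by (induction K) auto
lemma octx_topadd[simp]: "octx (topadd K M) = octx K + outs M" by (cases K) auto
lemma octx_ext[simp]: "octx (ext K M) = octx K + outs M" by (induction K) auto
lemma octx_comp[simp]: "octx (comp C K) = octx C + octx K" by (induction C) auto

lemma strip_fill: "strip (fill K X) = fill (down K) (strip X)"
  by (induction K) auto
lemma down_topadd[simp]: "down (topadd K M) = topadd (down K) (strip M)"
  by (cases K) auto
lemma down_ext[simp]: "down (ext K M) = ext (down K) (strip M)"
  by (induction K) auto
lemma down_comp[simp]: "down (comp C K) = comp (down C) (down K)"
  by (induction C) auto
lemma down_down[simp]: "down (down K) = down K"
  by (induction K) auto
lemma octx_down[simp]: "octx (down K) = 0"
  by (induction K) auto
lemma hl_down[simp]: "hl (down K) = strip (hl K)" by (induction K) auto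
lemma hl_ext[simp]: "hl (ext K M) = hl K + M" by (induction K) auto

lemma down_fill_strip: "fill (down K) X = fill (down K) (strip X) + (X - strip X) \<Longrightarrow> True" by simp

datatype 'a ctx2 = Split "'a ctx" "'a ctx" | Down2 "'a seq" "'a fm" "'a ctx2"

primrec fill2 :: "'a ctx2 \<Rightarrow> 'a seq \<Rightarrow> 'a seq \<Rightarrow> 'a seq" where
  "fill2 (Split K1 K2) X Y = fill K1 X + fill K2 Y"
| "fill2 (Down2 \<Delta> \<psi> C) X Y = \<Delta> + {# Comp \<psi> (fill2 C X Y) #}"

primrec hy :: "'a ctx2 \<Rightarrow> 'a seq \<Rightarrow> 'a ctx" where
  "hy (Split K1 K2) Y = topadd K1 (fill K2 Y)"
| "hy (Down2 \<Delta> \<psi> C) Y = Nest \<Delta> \<psi> (hy C Y)"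

primrec gx :: "'a ctx2 \<Rightarrow> 'a seq \<Rightarrow> 'a ctx" where
  "gx (Split K1 K2) X = topadd K2 (fill K1 X)"
| "gx (Down2 \<Delta> \<psi> C) X = Nest \<Delta> \<psi> (gx C X)"

primrec down2 :: "'a ctx2 \<Rightarrow> 'a ctx2" where
  "down2 (Split K1 K2) = Split (down K1) (down K2)"
| "down2 (Down2 \<Delta> \<psi> C) = Down2 (strip \<Delta>) \<psi> (down2 C)"

primrec o2 :: "'a ctx2 \<Rightarrow> nat" where
  "o2 (Split K1 K2) = octx K1 + octx K2"
| "o2 (Down2 \<Delta> \<psi> C) = outs \<Delta> + o2 C"

lemma fill_hy[simp]: "fill (hy C Y) X = fill2 C X Y"
  by (induction C) (auto simp: ac_simps)
lemma fill_gx[simp]: "fill (gx C X) Y = fill2 C X Y"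
  by (induction C) (auto simp: ac_simps)
lemma down_hy[simp]: "down (hy C Y) = hy (down2 C) (strip Y)"
  by (induction C) (auto simp: strip_fill)
lemma down_gx[simp]: "down (gx C X) = gx (down2 C) (strip X)"
  by (induction C) (auto simp: strip_fill)
lemma down2_down2[simp]: "down2 (down2 C) = down2 C"
  by (induction C) auto
lemma outs_fill2[simp]: "outs (fill2 C X Y) = o2 C + outs X + outs Y"
  by (induction C) auto
lemma o2_down2[simp]: "o2 (down2 C) = 0"
  by (induction C) auto
lemma octx_hy[simp]: "octx (hy C Y) = o2 C + outs Y"
  by (induction C) auto
lemma octx_gx[simp]: "octx (gx C X) = o2 C + outs X"
  by (induction C) auto



section \<open>Simulation relation: weakening, inversion, contraction, merging\<close>

fun inv_in :: "'a fm \<Rightarrow> 'a seq \<Rightarrow> bool" where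
  "inv_in (Conj a b) I = (I = {#In a, In b#})"
| "inv_in (Disj a b) I = (I = {#In a#} \<or> I = {#In b#})"
| "inv_in (Imp a b) I = (I = {#In b#})"
| "inv_in (DiaArr a b) I = (I = {#Comp a {#In b#}#})"
| "inv_in _ I = False"

fun inv_out :: "'a fm \<Rightarrow> 'a seq \<Rightarrow> bool" where
  "inv_out (Conj a b) I = (I = {#Out a#} \<or> I = {#Out b#})"
| "inv_out (Imp a b) I = (I = {#In a, Out b#})"
| "inv_out (BoxArr a b) I = (I = {#Comp a {#Out b#}#})"
| "inv_out _ I = False"

fun imgs :: "'a item \<Rightarrow> 'a seq \<Rightarrow> bool" where
  "imgs (In a) I = (I = {#In a#} \<or> inv_in a I)"
| "imgs (Out a) I = (I = {#Out a#} \<or> inv_out a I)"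
| "imgs (Comp a A) I = False"

inductive sim :: "('a fm \<Rightarrow> 'a fm \<Rightarrow> bool) \<Rightarrow> 'a seq \<Rightarrow> 'a seq \<Rightarrow> bool" for Q where
  s_empty: "outs T = 0 \<Longrightarrow> sim Q {#} T"
| s_item: "imgs x I \<Longrightarrow> sim Q S T \<Longrightarrow> sim Q (add_mset x S) (I + T)"
| s_contr: "sim Q S T \<Longrightarrow> sim Q (add_mset (In (Atom p)) (add_mset (In (Atom p)) S)) (add_mset (In (Atom p)) T)"
| s_comp: "sim Q A B \<Longrightarrow> Q a b \<Longrightarrow> sim Q S T \<Longrightarrow> sim Q (add_mset (Comp a A) S) (add_mset (Comp b B) T)"
| s_merge: "sim Q (A1 + A2) B \<Longrightarrow> Q a1 b \<Longrightarrow> Q a2 b \<Longrightarrow> sim Q S T \<Longrightarrow>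
    sim Q (add_mset (Comp a1 A1) (add_mset (Comp a2 A2) S)) (add_mset (Comp b B) T)"

lemma imgs_outs: "imgs x I \<Longrightarrow> outs I = outs_item x"
proof (cases x)
  case (In a) assume "imgs x I" with In show ?thesis by (cases a) auto
next
  case (Out a) assume "imgs x I" with Out show ?thesis by (cases a) auto
qed auto

lemma sim_outs: "sim Q S T \<Longrightarrow> outs T = outs S"
  by (induction rule: sim.induct) (auto simp: imgs_outs)

lemma sim_extra: "sim Q S T \<Longrightarrow> outs E = 0 \<Longrightarrow> sim Q S (T + E)"
proof (induction rule: sim.induct)
  case (s_item x I S T)
  then show ?case using sim.s_item[where x=x and I=I and S=S and T="T + E"] by (simp add: ac_simps)
qed (auto intro: sim.intros)

lemma sim_plus: "sim Q S T \<Longrightarrow> sim Q S' T' \<Longrightarrow> sim Q (S + S') (T + T')"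
proof (induction rule: sim.induct)
  case (s_empty T)
  then show ?case using sim_extra[of Q S' T' T] by (simp add: ac_simps)
next
  case (s_item x I S T)
  then show ?case using sim.s_item[where x=x and I=I and S="S + S'" and T="T + T'"] by (simp add: ac_simps)
qed (auto intro: sim.intros)

lemma sim_empty_iff: "sim Q {#} {#}" by (rule s_empty) simp

lemma sim_refl_item: "(\<And>a. Q a a) \<Longrightarrow> sim Q {#x#} {#x#}"
proof (induction x)
  case (In a)
  then show ?case using s_item[of "In a" "{#In a#}" Q "{#}" "{#}"] sim_empty_iff by auto
next
  case (Out a)
  then show ?case using s_item[of "Out a" "{#Out a#}" Q "{#}" "{#}"] sim_empty_iff by auto
next
  case (Comp a S)
  have "sim Q S S" using Comp
  proof (induction S)
    case empty show ?case by (rule sim_empty_iff)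
  next
    case (add x S)
    then have "sim Q {#x#} {#x#}" "sim Q S S" by auto
    then show ?case using sim_plus[of Q "{#x#}" "{#x#}" S S] by simp
  qed
  then show ?case using s_comp[of Q S S a a "{#}" "{#}"] sim_empty_iff Comp by auto
qed

lemma sim_refl: "(\<And>a. Q a a) \<Longrightarrow> sim Q S S"
proof (induction S)
  case empty show ?case by (rule sim_empty_iff)
next
  case (add x S)
  then show ?case using sim_plus[OF sim_refl_item[of Q x] add(1)] add(2) by simp
qed

lemma sim_add_in: "sim Q S T \<Longrightarrow> sim Q (add_mset (In a) S) (add_mset (In a) T)"
  using s_item[of "In a" "{#In a#}" Q S T] by simp
lemma sim_add_out: "sim Q S T \<Longrightarrow> sim Q (add_mset (Out a) S) (add_mset (Out a) T)"
  using s_item[of "Out a" "{#Out a#}" Q S T] by simp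

lemma sim_strip: "sim Q S T \<Longrightarrow> sim Q (strip S) (strip T)"
proof (induction rule: sim.induct)
  case (s_empty T)
  then show ?case by (simp add: sim.s_empty)
next
  case (s_item x I S T)
  show ?case
  proof (cases x)
    case (In a)
    show ?thesis
    proof (cases a)
      case (DiaArr b c)
      then show ?thesis using s_item In sim.s_item[of x I Q "strip S" "strip T"] by auto
    qed (use s_item In sim.s_item[of x I Q "strip S" "strip T"] in \<open>auto simp: sim_add_in\<close>)
  next
    case (Out a)
    show ?thesis
    proof (cases a)
      case (Imp b c)
      then show ?thesis using s_item Out sim_extra[of Q "strip S" "strip T" "{#In b#}"]
        by (auto simp: ac_simps)
    next
      case (BoxArr b c)
      then show ?thesis using s_item Out sim_extra[of Q "strip S" "strip T" "{#Comp b {#}#}"]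
        by (auto simp: ac_simps)
    qed (use s_item Out in auto)
  next
    case (Comp a A) then show ?thesis using s_item by simp
  qed
next
  case (s_contr S T p)
  then show ?case by (simp add: sim.s_contr)
next
  case (s_comp A B a b S T)
  then show ?case by (simp add: sim.s_comp)
next
  case (s_merge A1 A2 B a1 b a2 S T)
  then show ?case by (simp add: sim.s_merge)
qed

lemma sim_fill_mono: "(\<And>a. Q a a) \<Longrightarrow> sim Q A B \<Longrightarrow> sim Q (fill K A) (fill K B)"
proof (induction K)
  case (Top \<Delta>)
  then show ?case using sim_plus[OF sim_refl[of Q \<Delta>]] by simp
next
  case (Nest \<Delta> \<psi> C)
  then show ?case using s_comp[of Q "fill C A" "fill C B" \<psi> \<psi> \<Delta> \<Delta>] sim_refl[of Q \<Delta>] by simp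
qed

lemma sim_fill2_mono: "(\<And>a. Q a a) \<Longrightarrow> sim Q A B \<Longrightarrow> sim Q (fill2 C A Y) (fill2 C B Y)"
  using sim_fill_mono[of Q A B "hy C Y"] by simp

lemma sim_fill2_mono2: "(\<And>a. Q a a) \<Longrightarrow> sim Q A B \<Longrightarrow> sim Q (fill2 C X A) (fill2 C X B)"
  using sim_fill_mono[of Q A B "gx C X"] by simp



lemma sim_item_inv:
  assumes "sim Q S Z" "x \<in># S" "\<forall>a A. x \<noteq> Comp a A" "\<forall>p. x \<noteq> In (Atom p)"
  shows "\<exists>I Z0. Z = I + Z0 \<and> imgs x I \<and> sim Q (S - {#x#}) Z0"
  using assms
proof (induction rule: sim.induct)
  case (s_empty T)
  then show ?case by simp
next
  case (s_item y I' S T)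
  show ?case
  proof (cases "x = y")
    case True
    then show ?thesis using s_item by auto
  next
    case False
    then have "x \<in># S" using s_item by auto
    then obtain I Z0 where "T = I + Z0" "imgs x I" "sim Q (S - {#x#}) Z0" using s_item by auto
    moreover have "add_mset y S - {#x#} = add_mset y (S - {#x#})" using \<open>x \<in># S\<close> by simp
    ultimately show ?thesis using sim.s_item[OF s_item(1), of Q "S - {#x#}" Z0]
      by (intro exI[of _ I] exI[of _ "I' + Z0"]) (auto simp: ac_simps)
  qed
next
  case (s_contr S T p)
  then have "x \<in># S" by auto
  then obtain I Z0 where "T = I + Z0" "imgs x I" "sim Q (S - {#x#}) Z0" using s_contr by auto
  moreover have "add_mset (In (Atom p)) (add_mset (In (Atom p)) S) - {#x#} =
     add_mset (In (Atom p)) (add_mset (In (Atom p)) (S - {#x#}))" using \<open>x \<in># S\<close> by simp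
  ultimately show ?case using sim.s_contr[of Q "S - {#x#}" Z0 p]
    by (intro exI[of _ I] exI[of _ "add_mset (In (Atom p)) Z0"]) auto
next
  case (s_comp A B a b S T)
  then have "x \<in># S" by auto
  then obtain I Z0 where "T = I + Z0" "imgs x I" "sim Q (S - {#x#}) Z0" using s_comp by auto
  moreover have "add_mset (Comp a A) S - {#x#} = add_mset (Comp a A) (S - {#x#})" using \<open>x \<in># S\<close> by simp
  ultimately show ?case using sim.s_comp[OF \<open>sim Q A B\<close> \<open>Q a b\<close> \<open>sim Q (S - {#x#}) Z0\<close>]
    by (intro exI[of _ I] exI[of _ "add_mset (Comp b B) Z0"]) auto
next
  case (s_merge A1 A2 B a1 b a2 S T)
  then have "x \<in># S" by auto
  then obtain I Z0 where "T = I + Z0" "imgs x I" "sim Q (S - {#x#}) Z0" using s_merge by auto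
  moreover have "add_mset (Comp a1 A1) (add_mset (Comp a2 A2) S) - {#x#} =
      add_mset (Comp a1 A1) (add_mset (Comp a2 A2) (S - {#x#}))" using \<open>x \<in># S\<close> by simp
  ultimately show ?case using sim.s_merge[OF \<open>sim Q (A1 + A2) B\<close> \<open>Q a1 b\<close> \<open>Q a2 b\<close> \<open>sim Q (S - {#x#}) Z0\<close>]
    by (intro exI[of _ I] exI[of _ "add_mset (Comp b B) Z0"]) auto
qed

lemma sim_item_inv':
  assumes "sim Q (add_mset x W) Z" "\<forall>a A. x \<noteq> Comp a A" "\<forall>p. x \<noteq> In (Atom p)"
  shows "\<exists>I Z0. Z = I + Z0 \<and> imgs x I \<and> sim Q W Z0"
  using sim_item_inv[OF assms(1) _ assms(2,3)] by auto

lemma sim_atom_mem: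
  assumes "sim Q S Z" "In (Atom p) \<in># S"
  shows "In (Atom p) \<in># Z"
  using assms
proof (induction rule: sim.induct)
  case (s_item x I S T)
  then show ?case by (cases "x = In (Atom p)") auto
qed auto

lemma sim_comp_inv:
  assumes "sim Q S Z" "Comp a A \<in># S"
  shows "\<exists>b B Z0. Z = add_mset (Comp b B) Z0 \<and> Q a b \<and>
     ((sim Q A B \<and> sim Q (S - {#Comp a A#}) Z0) \<or>
      (\<exists>a2 A2. Comp a2 A2 \<in># S - {#Comp a A#} \<and> Q a2 b \<and> sim Q (A + A2) B \<and>
         sim Q (S - {#Comp a A#} - {#Comp a2 A2#}) Z0))"
  using assms
proof (induction rule: sim.induct)
  case (s_empty T)
  then show ?case by simp
next
  case (s_item y I S T)
  then have ne: "y \<noteq> Comp a A" by auto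
  then have "Comp a A \<in># S" using s_item by auto
  then obtain b B Z0 where Z0: "T = add_mset (Comp b B) Z0" "Q a b" and
    alt: "(sim Q A B \<and> sim Q (S - {#Comp a A#}) Z0) \<or>
      (\<exists>a2 A2. Comp a2 A2 \<in># S - {#Comp a A#} \<and> Q a2 b \<and> sim Q (A + A2) B \<and>
         sim Q (S - {#Comp a A#} - {#Comp a2 A2#}) Z0)" using s_item by blast
  have e1: "add_mset y S - {#Comp a A#} = add_mset y (S - {#Comp a A#})" using \<open>Comp a A \<in># S\<close> by simp
  from alt show ?case
  proof
    assume h: "sim Q A B \<and> sim Q (S - {#Comp a A#}) Z0"
    show ?thesis
      using h Z0 e1 sim.s_item[OF s_item(1), of Q "S - {#Comp a A#}" Z0]
      by (intro exI[of _ b] exI[of _ B] exI[of _ "I + Z0"]) auto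
  next
    assume "\<exists>a2 A2. Comp a2 A2 \<in># S - {#Comp a A#} \<and> Q a2 b \<and> sim Q (A + A2) B \<and>
         sim Q (S - {#Comp a A#} - {#Comp a2 A2#}) Z0"
    then obtain a2 A2 where h: "Comp a2 A2 \<in># S - {#Comp a A#}" "Q a2 b" "sim Q (A + A2) B"
         "sim Q (S - {#Comp a A#} - {#Comp a2 A2#}) Z0" by blast
    have "y \<noteq> Comp a2 A2" using s_item(1) by (cases y) auto
    then have e2: "add_mset y (S - {#Comp a A#}) - {#Comp a2 A2#} = add_mset y (S - {#Comp a A#} - {#Comp a2 A2#})"
      using h(1) by simp
    have m: "Comp a2 A2 \<in># add_mset y S - {#Comp a A#}" using h(1) e1 by simp
    have "sim Q (add_mset y S - {#Comp a A#} - {#Comp a2 A2#}) (I + Z0)"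
      using e1 e2 sim.s_item[OF s_item(1) h(4)] by simp
    then show ?thesis using h(2,3) m Z0 by (intro exI[of _ b] exI[of _ B] exI[of _ "I + Z0"]) auto
  qed
next
  case (s_contr S T p)
  then have "Comp a A \<in># S" by auto
  then obtain b B Z0 where Z0: "T = add_mset (Comp b B) Z0" "Q a b" and
    alt: "(sim Q A B \<and> sim Q (S - {#Comp a A#}) Z0) \<or>
      (\<exists>a2 A2. Comp a2 A2 \<in># S - {#Comp a A#} \<and> Q a2 b \<and> sim Q (A + A2) B \<and>
         sim Q (S - {#Comp a A#} - {#Comp a2 A2#}) Z0)" using s_contr by blast
  let ?p = "In (Atom p)"
  have e1: "add_mset ?p (add_mset ?p S) - {#Comp a A#} = add_mset ?p (add_mset ?p (S - {#Comp a A#}))"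
    using \<open>Comp a A \<in># S\<close> by simp
  from alt show ?case
  proof
    assume h: "sim Q A B \<and> sim Q (S - {#Comp a A#}) Z0"
    show ?thesis
      using h Z0 e1 sim.s_contr[of Q "S - {#Comp a A#}" Z0 p]
      by (intro exI[of _ b] exI[of _ B] exI[of _ "add_mset ?p Z0"]) auto
  next
    assume "\<exists>a2 A2. Comp a2 A2 \<in># S - {#Comp a A#} \<and> Q a2 b \<and> sim Q (A + A2) B \<and>
         sim Q (S - {#Comp a A#} - {#Comp a2 A2#}) Z0"
    then obtain a2 A2 where h: "Comp a2 A2 \<in># S - {#Comp a A#}" "Q a2 b" "sim Q (A + A2) B"
         "sim Q (S - {#Comp a A#} - {#Comp a2 A2#}) Z0" by blast
    have e2: "add_mset ?p (add_mset ?p (S - {#Comp a A#})) - {#Comp a2 A2#} = add_mset ?p (add_mset ?p (S - {#Comp a A#} - {#Comp a2 A2#}))"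
      using h(1) by simp
    have m: "Comp a2 A2 \<in># add_mset ?p (add_mset ?p S) - {#Comp a A#}" using h(1) e1 by simp
    have "sim Q (add_mset ?p (add_mset ?p S) - {#Comp a A#} - {#Comp a2 A2#}) (add_mset ?p Z0)"
      using e1 e2 sim.s_contr[OF h(4)] by simp
    then show ?thesis using h(2,3) m Z0 by (intro exI[of _ b] exI[of _ B] exI[of _ "add_mset ?p Z0"]) auto
  qed
next
  case (s_comp A' B' a' b' S T)
  show ?case
  proof (cases "Comp a A = Comp a' A'")
    case True
    then show ?thesis using s_comp by (intro exI[of _ b'] exI[of _ B'] exI[of _ T]) auto
  next
    case False
    then have "Comp a A \<in># S" using s_comp by auto
    then obtain b B Z0 where Z0: "T = add_mset (Comp b B) Z0" "Q a b" and
      alt: "(sim Q A B \<and> sim Q (S - {#Comp a A#}) Z0) \<or>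
        (\<exists>a2 A2. Comp a2 A2 \<in># S - {#Comp a A#} \<and> Q a2 b \<and> sim Q (A + A2) B \<and>
           sim Q (S - {#Comp a A#} - {#Comp a2 A2#}) Z0)" using s_comp by blast
    let ?c = "Comp a' A'"
    have e1: "add_mset ?c S - {#Comp a A#} = add_mset ?c (S - {#Comp a A#})"
      using \<open>Comp a A \<in># S\<close> by simp
    from alt show ?thesis
    proof
      assume h: "sim Q A B \<and> sim Q (S - {#Comp a A#}) Z0"
      show ?thesis
        using h Z0 e1 sim.s_comp[OF \<open>sim Q A' B'\<close> \<open>Q a' b'\<close> conjunct2[OF h]]
        by (intro exI[of _ b] exI[of _ B] exI[of _ "add_mset (Comp b' B') Z0"]) auto
    next
      assume "\<exists>a2 A2. Comp a2 A2 \<in># S - {#Comp a A#} \<and> Q a2 b \<and> sim Q (A + A2) B \<and>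
           sim Q (S - {#Comp a A#} - {#Comp a2 A2#}) Z0"
      then obtain a2 A2 where h: "Comp a2 A2 \<in># S - {#Comp a A#}" "Q a2 b" "sim Q (A + A2) B"
           "sim Q (S - {#Comp a A#} - {#Comp a2 A2#}) Z0" by blast
      have e2: "add_mset ?c (S - {#Comp a A#}) - {#Comp a2 A2#} = add_mset ?c (S - {#Comp a A#} - {#Comp a2 A2#})"
        using h(1) by simp
      have m: "Comp a2 A2 \<in># add_mset ?c S - {#Comp a A#}" using h(1) e1 by simp
      have "sim Q (add_mset ?c S - {#Comp a A#} - {#Comp a2 A2#}) (add_mset (Comp b' B') Z0)"
        using e1 e2 sim.s_comp[OF \<open>sim Q A' B'\<close> \<open>Q a' b'\<close> h(4)] by simp
      then show ?thesis using h(2,3) m Z0 by (intro exI[of _ b] exI[of _ B] exI[of _ "add_mset (Comp b' B') Z0"]) auto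
    qed
  qed
next
  case (s_merge A1 A2 B' a1 b' a2 S T)
  show ?case
  proof (cases "Comp a A = Comp a1 A1")
    case True
    then show ?thesis using s_merge
      by (intro exI[of _ b'] exI[of _ B'] exI[of _ T]) (auto intro!: exI[of _ a2] exI[of _ A2])
  next
    case F1: False
    show ?thesis
    proof (cases "Comp a A = Comp a2 A2")
      case True
      then show ?thesis using s_merge F1
        by (intro exI[of _ b'] exI[of _ B'] exI[of _ T]) (auto intro!: exI[of _ a1] exI[of _ A1] simp: ac_simps)
    next
      case F2: False
      then have "Comp a A \<in># S" using s_merge F1 by auto
      then obtain b B Z0 where Z0: "T = add_mset (Comp b B) Z0" "Q a b" and
        alt: "(sim Q A B \<and> sim Q (S - {#Comp a A#}) Z0) \<or>
          (\<exists>a3 A3. Comp a3 A3 \<in># S - {#Comp a A#} \<and> Q a3 b \<and> sim Q (A + A3) B \<and>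
             sim Q (S - {#Comp a A#} - {#Comp a3 A3#}) Z0)" using s_merge by blast
      let ?c1 = "Comp a1 A1" and ?c2 = "Comp a2 A2"
      have e1: "add_mset ?c1 (add_mset ?c2 S) - {#Comp a A#} = add_mset ?c1 (add_mset ?c2 (S - {#Comp a A#}))"
        using \<open>Comp a A \<in># S\<close> by simp
      from alt show ?thesis
      proof
        assume h: "sim Q A B \<and> sim Q (S - {#Comp a A#}) Z0"
        show ?thesis
          using h Z0 e1 sim.s_merge[OF \<open>sim Q (A1 + A2) B'\<close> \<open>Q a1 b'\<close> \<open>Q a2 b'\<close> conjunct2[OF h]]
          by (intro exI[of _ b] exI[of _ B] exI[of _ "add_mset (Comp b' B') Z0"]) auto
      next
        assume "\<exists>a3 A3. Comp a3 A3 \<in># S - {#Comp a A#} \<and> Q a3 b \<and> sim Q (A + A3) B \<and>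
             sim Q (S - {#Comp a A#} - {#Comp a3 A3#}) Z0"
        then obtain a3 A3 where h: "Comp a3 A3 \<in># S - {#Comp a A#}" "Q a3 b" "sim Q (A + A3) B"
             "sim Q (S - {#Comp a A#} - {#Comp a3 A3#}) Z0" by blast
        have e2: "add_mset ?c1 (add_mset ?c2 (S - {#Comp a A#})) - {#Comp a3 A3#} =
           add_mset ?c1 (add_mset ?c2 (S - {#Comp a A#} - {#Comp a3 A3#}))"
          using h(1) by simp
        have m: "Comp a3 A3 \<in># add_mset ?c1 (add_mset ?c2 S) - {#Comp a A#}" using h(1) e1 by simp
        have "sim Q (add_mset ?c1 (add_mset ?c2 S) - {#Comp a A#} - {#Comp a3 A3#}) (add_mset (Comp b' B') Z0)"
          using e1 e2 sim.s_merge[OF \<open>sim Q (A1 + A2) B'\<close> \<open>Q a1 b'\<close> \<open>Q a2 b'\<close> h(4)] by simp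
        then show ?thesis using h(2,3) m Z0 by (intro exI[of _ b] exI[of _ B] exI[of _ "add_mset (Comp b' B') Z0"]) auto
      qed
    qed
  qed
qed



lemma sim_fill_dec_aux:
  "sim Q (fill (topadd C E) X) T \<Longrightarrow> \<exists>G' Z W. T = fill G' Z \<and> sim Q (X + W) Z \<and>
     (\<forall>Y Z'. sim Q (Y + W) Z' \<longrightarrow> sim Q (fill (topadd C E) Y) (fill G' Z')) \<and>
     (\<forall>Y Z'. sim Q (Y + strip W) Z' \<longrightarrow> sim Q (fill (down (topadd C E)) Y) (fill (down G') Z'))"
proof (induction C arbitrary: E T)
  case (Top \<Delta>)
  then show ?case
    by (intro exI[of _ "Top {#}"] exI[of _ T] exI[of _ "\<Delta> + E"]) (auto simp: ac_simps)
next
  case (Nest \<Delta> \<psi> C)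
  have "sim Q (add_mset (Comp \<psi> (fill C X)) (\<Delta> + E)) T" using Nest.prems by (simp add: ac_simps)
  from sim_comp_inv[OF this, of \<psi> "fill C X"]
  have "\<exists>b B Z0. T = add_mset (Comp b B) Z0 \<and> Q \<psi> b \<and> ((sim Q (fill C X) B \<and> sim Q (\<Delta> + E) Z0) \<or>
      (\<exists>a2 A2. Comp a2 A2 \<in># \<Delta> + E \<and> Q a2 b \<and> sim Q (fill C X + A2) B \<and>
         sim Q (\<Delta> + E - {#Comp a2 A2#}) Z0))" by simp
  then obtain b B Z0 where T: "T = add_mset (Comp b B) Z0" and Q: "Q \<psi> b" and
    alt: "(sim Q (fill C X) B \<and> sim Q (\<Delta> + E) Z0) \<or>
      (\<exists>a2 A2. Comp a2 A2 \<in># \<Delta> + E \<and> Q a2 b \<and> sim Q (fill C X + A2) B \<and>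
         sim Q (\<Delta> + E - {#Comp a2 A2#}) Z0)" by blast
  from alt show ?case
  proof
    assume h: "sim Q (fill C X) B \<and> sim Q (\<Delta> + E) Z0"
    then have "sim Q (fill (topadd C {#}) X) B" by simp
    from Nest.IH[OF this] obtain G'' Z W where IH: "B = fill G'' Z" "sim Q (X + W) Z"
      "\<forall>Y Z'. sim Q (Y + W) Z' \<longrightarrow> sim Q (fill C Y) (fill G'' Z')"
      "\<forall>Y Z'. sim Q (Y + strip W) Z' \<longrightarrow> sim Q (fill (down C) Y) (fill (down G'') Z')" by auto
    show ?thesis
    proof (rule exI[of _ "Nest Z0 b G''"], rule exI[of _ Z], rule exI[of _ W], intro conjI allI impI)
      show "T = fill (Nest Z0 b G'') Z" using T IH by (simp add: ac_simps)
    next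
      show "sim Q (X + W) Z" using IH(2) by simp
    next
      fix Y Z' assume "sim Q (Y + W) Z'"
      then show "sim Q (fill (topadd (Nest \<Delta> \<psi> C) E) Y) (fill (Nest Z0 b G'') Z')"
        using IH(3) s_comp[OF _ Q conjunct2[OF h], of "fill C Y" "fill G'' Z'"] by (simp add: ac_simps)
    next
      fix Y Z' assume "sim Q (Y + strip W) Z'"
      then show "sim Q (fill (down (topadd (Nest \<Delta> \<psi> C) E)) Y) (fill (down (Nest Z0 b G'')) Z')"
        using IH(4) s_comp[OF _ Q sim_strip[OF conjunct2[OF h]], of "fill (down C) Y" "fill (down G'') Z'"]
        by (simp add: ac_simps)
    qed
  next
    assume "\<exists>a2 A2. Comp a2 A2 \<in># \<Delta> + E \<and> Q a2 b \<and> sim Q (fill C X + A2) B \<and>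
         sim Q (\<Delta> + E - {#Comp a2 A2#}) Z0"
    then obtain a2 A2 where h: "Comp a2 A2 \<in># \<Delta> + E" "Q a2 b" "sim Q (fill C X + A2) B"
         "sim Q (\<Delta> + E - {#Comp a2 A2#}) Z0" by blast
    define R where "R = \<Delta> + E - {#Comp a2 A2#}"
    have DE: "\<Delta> + E = add_mset (Comp a2 A2) R" using h(1) unfolding R_def by simp
    have "sim Q (fill (topadd C A2) X) B" using h(3) by simp
    from Nest.IH[OF this] obtain G'' Z W where IH: "B = fill G'' Z" "sim Q (X + W) Z"
      "\<forall>Y Z'. sim Q (Y + W) Z' \<longrightarrow> sim Q (fill (topadd C A2) Y) (fill G'' Z')"
      "\<forall>Y Z'. sim Q (Y + strip W) Z' \<longrightarrow> sim Q (fill (down (topadd C A2)) Y) (fill (down G'') Z')" by auto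
    show ?thesis
    proof (rule exI[of _ "Nest Z0 b G''"], rule exI[of _ Z], rule exI[of _ W], intro conjI allI impI)
      show "T = fill (Nest Z0 b G'') Z" using T IH by (simp add: ac_simps)
    next
      show "sim Q (X + W) Z" using IH(2) by simp
    next
      fix Y Z' assume "sim Q (Y + W) Z'"
      then have "sim Q (fill C Y + A2) (fill G'' Z')" using IH(3) by auto
      from s_merge[OF this Q h(2) h(4)[folded R_def]]
      show "sim Q (fill (topadd (Nest \<Delta> \<psi> C) E) Y) (fill (Nest Z0 b G'') Z')"
        using DE by (simp add: ac_simps)
    next
      fix Y Z' assume "sim Q (Y + strip W) Z'"
      then have "sim Q (fill (down C) Y + strip A2) (fill (down G'') Z')" using IH(4) by auto
      from s_merge[OF this Q h(2) sim_strip[OF h(4)[folded R_def]]]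
      show "sim Q (fill (down (topadd (Nest \<Delta> \<psi> C) E)) Y) (fill (down (Nest Z0 b G'')) Z')"
        using DE arg_cong[OF DE, of strip] by (simp add: ac_simps)
    qed
  qed
qed

lemma sim_fill_dec:
  "sim Q (fill C X) T \<Longrightarrow> \<exists>G' Z W. T = fill G' Z \<and> sim Q (X + W) Z \<and>
     (\<forall>Y Z'. sim Q (Y + W) Z' \<longrightarrow> sim Q (fill C Y) (fill G' Z')) \<and>
     (\<forall>Y Z'. sim Q (Y + strip W) Z' \<longrightarrow> sim Q (fill (down C) Y) (fill (down G') Z'))"
  using sim_fill_dec_aux[of Q C "{#}" X T] by simp



lemma derivable_nested: "derivable c S \<Longrightarrow> is_nested S"
  by (induction rule: derivable.induct) auto

lemma sim_nested: "is_nested S \<Longrightarrow> sim Q S T \<Longrightarrow> is_nested T"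
  using sim_outs unfolding is_nested_def by metis

lemma sim_plus_refl: "(\<And>a. Q a a) \<Longrightarrow> sim Q W Z \<Longrightarrow> sim Q (Y + W) (Y + Z)"
  using sim_plus[OF sim_refl[of Q Y]] by blast

lemma sim_dec_single:
  assumes "sim Q (fill G {#x#}) T" "\<forall>a A. x \<noteq> Comp a A" "\<forall>p. x \<noteq> In (Atom p)" "\<And>a. Q a a"
  shows "\<exists>G' I. T = fill G' I \<and> imgs x I \<and> (\<forall>Y. sim Q (fill G Y) (fill G' Y)) \<and>
     (\<forall>Y. sim Q (fill (down G) Y) (fill (down G') Y))"
proof -
  obtain G'' Z W where d: "T = fill G'' Z" "sim Q ({#x#} + W) Z"
     "\<forall>Y Z'. sim Q (Y + W) Z' \<longrightarrow> sim Q (fill G Y) (fill G'' Z')"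
     "\<forall>Y Z'. sim Q (Y + strip W) Z' \<longrightarrow> sim Q (fill (down G) Y) (fill (down G'') Z')"
    using sim_fill_dec[OF assms(1)] by blast
  from sim_item_inv'[of Q x W Z] d(2) assms(2,3)
  obtain I Z0 where i: "Z = I + Z0" "imgs x I" "sim Q W Z0" by auto
  show ?thesis
  proof (intro exI[of _ "ext G'' Z0"] exI[of _ I] conjI allI)
    show "T = fill (ext G'' Z0) I" using d(1) i(1) by (simp add: ac_simps)
    show "imgs x I" by fact
  next
    fix Y
    have "sim Q (Y + W) (Y + Z0)" using sim_plus_refl[OF assms(4) i(3)] .
    then show "sim Q (fill G Y) (fill (ext G'' Z0) Y)" using d(3) by (simp add: ac_simps)
  next
    fix Y
    have "sim Q (Y + strip W) (Y + strip Z0)" using sim_plus_refl[OF assms(4) sim_strip[OF i(3)]] .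
    then show "sim Q (fill (down G) Y) (fill (down (ext G'' Z0)) Y)" using d(4) by (simp add: ac_simps)
  qed
qed

lemma sim_dec_comp2:
  assumes "sim Q (fill G {#x, Comp \<eta> \<Delta>#}) T" "\<And>I. imgs x I \<Longrightarrow> I = {#x#}"
     "\<forall>a A. x \<noteq> Comp a A" "\<forall>p. x \<noteq> In (Atom p)" "\<And>a. Q a a"
  shows "\<exists>G' \<eta>' B. T = fill G' {#x, Comp \<eta>' B#} \<and> Q \<eta> \<eta>' \<and>
     (\<forall>Y N. sim Q (fill G (add_mset (Comp \<eta> (N + \<Delta>)) Y)) (fill G' (add_mset (Comp \<eta>' (N + B)) Y)))"
proof -
  obtain G'' Z W where d: "T = fill G'' Z" "sim Q ({#x, Comp \<eta> \<Delta>#} + W) Z"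
     "\<forall>Y Z'. sim Q (Y + W) Z' \<longrightarrow> sim Q (fill G Y) (fill G'' Z')"
     "\<forall>Y Z'. sim Q (Y + strip W) Z' \<longrightarrow> sim Q (fill (down G) Y) (fill (down G'') Z')"
    using sim_fill_dec[OF assms(1)] by blast
  from sim_item_inv'[of Q x "add_mset (Comp \<eta> \<Delta>) W" Z] d(2) assms(3,4)
  obtain I Z0 where i: "Z = I + Z0" "imgs x I" "sim Q (add_mset (Comp \<eta> \<Delta>) W) Z0" by auto
  have I: "I = {#x#}" by (rule assms(2)[OF i(2)])
  have "\<exists>b B Z1. Z0 = add_mset (Comp b B) Z1 \<and> Q \<eta> b \<and> ((sim Q \<Delta> B \<and> sim Q W Z1) \<or>
      (\<exists>a2 A2. Comp a2 A2 \<in># W \<and> Q a2 b \<and> sim Q (\<Delta> + A2) B \<and>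
         sim Q (W - {#Comp a2 A2#}) Z1))" using sim_comp_inv[OF i(3), of \<eta> \<Delta>] by simp
  then obtain b B Z1 where c: "Z0 = add_mset (Comp b B) Z1" "Q \<eta> b" and
    alt: "(sim Q \<Delta> B \<and> sim Q W Z1) \<or>
      (\<exists>a2 A2. Comp a2 A2 \<in># W \<and> Q a2 b \<and> sim Q (\<Delta> + A2) B \<and>
         sim Q (W - {#Comp a2 A2#}) Z1)" by blast
  have key: "sim Q (add_mset (Comp \<eta> (N + \<Delta>)) W) (add_mset (Comp b (N + B)) Z1)" for N
    using alt
  proof
    assume h: "sim Q \<Delta> B \<and> sim Q W Z1"
    then show ?thesis using s_comp[OF sim_plus_refl[OF assms(5) conjunct1[OF h], of N] c(2) conjunct2[OF h]] by auto
  next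
    assume "\<exists>a2 A2. Comp a2 A2 \<in># W \<and> Q a2 b \<and> sim Q (\<Delta> + A2) B \<and>
         sim Q (W - {#Comp a2 A2#}) Z1"
    then obtain a2 A2 where h: "Comp a2 A2 \<in># W" "Q a2 b" "sim Q (\<Delta> + A2) B" "sim Q (W - {#Comp a2 A2#}) Z1"
      by blast
    have "sim Q (N + \<Delta> + A2) (N + B)" using sim_plus_refl[OF assms(5) h(3), of N] by (simp add: ac_simps)
    from s_merge[OF this c(2) h(2) h(4)] show ?thesis using h(1) by simp
  qed
  show ?thesis
  proof (rule exI[of _ "ext G'' Z1"], rule exI[of _ b], rule exI[of _ B], intro conjI allI)
    show "T = fill (ext G'' Z1) {#x, Comp b B#}" using d(1) i(1) I c(1) by (simp add: add_mset_commute)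
    show "Q \<eta> b" by fact
  next
    fix Y N
    have "sim Q (Y + add_mset (Comp \<eta> (N + \<Delta>)) W) (Y + add_mset (Comp b (N + B)) Z1)"
      using sim_plus_refl[OF assms(5) key] .
    then show "sim Q (fill G (add_mset (Comp \<eta> (N + \<Delta>)) Y)) (fill (ext G'' Z1) (add_mset (Comp b (N + B)) Y))"
      using d(3) by (simp add: ac_simps)
  qed
qed



definition teq :: "'a fm \<Rightarrow> 'a fm \<Rightarrow> bool" where
  "teq a b \<longleftrightarrow> derivable False {#In a, Out b#} \<and> derivable False {#In b, Out a#}"

definition transport :: "('a fm \<Rightarrow> 'a fm \<Rightarrow> bool) \<Rightarrow> bool" where
  "transport Q \<longleftrightarrow> (\<forall>a b c. Q a b \<longrightarrow> teq c a \<longrightarrow> teq c b)"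

lemma nested_fill_iff: "is_nested (fill G X) \<longleftrightarrow> octx G + outs X = 1"
  by (simp add: is_nested_def)

lemma sim_adm:
  assumes "derivable c S" "\<not> c" "sim Q S T" "\<And>a. Q a a" "transport Q"
  shows "derivable False T"
  using assms(1,2,3)
proof (induction arbitrary: T rule: derivable.induct)
  case (init G p)
  have nT: "is_nested T" using sim_nested init.hyps init.prems by blast
  obtain G'' Z W where d: "T = fill G'' Z" "sim Q ({#In (Atom p), Out (Atom p)#} + W) Z"
    using sim_fill_dec[OF init.prems(2)] by blast
  from sim_item_inv'[of Q "Out (Atom p)" "add_mset (In (Atom p)) W" Z] d(2)
  obtain I Z0 where i: "Z = I + Z0" "imgs (Out (Atom p)) I" "sim Q (add_mset (In (Atom p)) W) Z0"
    by (auto simp: add_mset_commute)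
  have "In (Atom p) \<in># Z0" using sim_atom_mem[OF i(3)] by simp
  then obtain Z1 where "Z0 = add_mset (In (Atom p)) Z1" by (metis multi_member_split)
  then have T: "T = fill (ext G'' Z1) {#In (Atom p), Out (Atom p)#}" using d(1) i(1,2)
    by (simp add: ac_simps)
  show ?case using nT unfolding T by (rule derivable.init)
next
  case (botL G)
  have nT: "is_nested T" using sim_nested botL.hyps botL.prems by blast
  obtain G' I where d: "T = fill G' I" "imgs (In Bot) I"
    using sim_dec_single[OF botL.prems(2) _ _ assms(4)] by auto
  then have T: "T = fill G' {#In Bot#}" by simp
  show ?case using nT unfolding T by (rule derivable.botL)
next
  case (conjL G a b)
  have nT: "is_nested T" using sim_nested conjL.hyps conjL.prems by blast
  obtain G' I where d: "T = fill G' I" "imgs (In (Conj a b)) I" "\<forall>Y. sim Q (fill G Y) (fill G' Y)"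
    using sim_dec_single[OF conjL.prems(2) _ _ assms(4)] by auto
  have P: "derivable False (fill G' {#In a, In b#})" using conjL.IH(1) conjL.prems(1) d(3) by blast
  from d(2) consider "I = {#In (Conj a b)#}" | "I = {#In a, In b#}" by auto
  then show ?case
  proof cases
    case 1
    show ?thesis unfolding d(1) 1
      by (rule derivable.conjL[OF P]) (use nT d(1) 1 in \<open>auto simp: nested_fill_iff\<close>)
  next
    case 2 then show ?thesis using P d(1) by simp
  qed
next
  case (conjR G a b)
  have nT: "is_nested T" using sim_nested conjR.hyps conjR.prems by blast
  obtain G' I where d: "T = fill G' I" "imgs (Out (Conj a b)) I" "\<forall>Y. sim Q (fill G Y) (fill G' Y)"
    using sim_dec_single[OF conjR.prems(2) _ _ assms(4)] by auto
  have P1: "derivable False (fill G' {#Out a#})" using conjR.IH(1) conjR.prems(1) d(3) by blast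
  have P2: "derivable False (fill G' {#Out b#})" using conjR.IH(2) conjR.prems(1) d(3) by blast
  from d(2) consider "I = {#Out (Conj a b)#}" | "I = {#Out a#}" | "I = {#Out b#}" by auto
  then show ?case
  proof cases
    case 1
    show ?thesis unfolding d(1) 1
      by (rule derivable.conjR[OF P1 P2]) (use nT d(1) 1 in \<open>auto simp: nested_fill_iff\<close>)
  next
    case 2 then show ?thesis using P1 d(1) by simp
  next
    case 3 then show ?thesis using P2 d(1) by simp
  qed
next
  case (disjL G a b)
  have nT: "is_nested T" using sim_nested disjL.hyps disjL.prems by blast
  obtain G' I where d: "T = fill G' I" "imgs (In (Disj a b)) I" "\<forall>Y. sim Q (fill G Y) (fill G' Y)"
    using sim_dec_single[OF disjL.prems(2) _ _ assms(4)] by auto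
  have P1: "derivable False (fill G' {#In a#})" using disjL.IH(1) disjL.prems(1) d(3) by blast
  have P2: "derivable False (fill G' {#In b#})" using disjL.IH(2) disjL.prems(1) d(3) by blast
  from d(2) consider "I = {#In (Disj a b)#}" | "I = {#In a#}" | "I = {#In b#}" by auto
  then show ?case
  proof cases
    case 1
    show ?thesis unfolding d(1) 1
      by (rule derivable.disjL[OF P1 P2]) (use nT d(1) 1 in \<open>auto simp: nested_fill_iff\<close>)
  next
    case 2 then show ?thesis using P1 d(1) by simp
  next
    case 3 then show ?thesis using P2 d(1) by simp
  qed
next
  case (disjR1 G a b)
  have nT: "is_nested T" using sim_nested disjR1.hyps disjR1.prems by blast
  obtain G' I where d: "T = fill G' I" "imgs (Out (Disj a b)) I" "\<forall>Y. sim Q (fill G Y) (fill G' Y)"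
    using sim_dec_single[OF disjR1.prems(2) _ _ assms(4)] by auto
  have P1: "derivable False (fill G' {#Out a#})" using disjR1.IH(1) disjR1.prems(1) d(3) by blast
  from d(2) have I: "I = {#Out (Disj a b)#}" by auto
  show ?case unfolding d(1) I
    by (rule derivable.disjR1[OF P1]) (use nT d(1) I in \<open>auto simp: nested_fill_iff\<close>)
next
  case (disjR2 G b a)
  have nT: "is_nested T" using sim_nested disjR2.hyps disjR2.prems by blast
  obtain G' I where d: "T = fill G' I" "imgs (Out (Disj a b)) I" "\<forall>Y. sim Q (fill G Y) (fill G' Y)"
    using sim_dec_single[OF disjR2.prems(2) _ _ assms(4)] by auto
  have P1: "derivable False (fill G' {#Out b#})" using disjR2.IH(1) disjR2.prems(1) d(3) by blast
  from d(2) have I: "I = {#Out (Disj a b)#}" by auto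
  show ?case unfolding d(1) I
    by (rule derivable.disjR2[OF P1]) (use nT d(1) I in \<open>auto simp: nested_fill_iff\<close>)
next
  case (impL G a b)
  have nT: "is_nested T" using sim_nested impL.hyps impL.prems by blast
  obtain G' I where d: "T = fill G' I" "imgs (In (Imp a b)) I" "\<forall>Y. sim Q (fill G Y) (fill G' Y)"
    "\<forall>Y. sim Q (fill (down G) Y) (fill (down G') Y)"
    using sim_dec_single[OF impL.prems(2) _ _ assms(4)] by auto
  have P1: "derivable False (fill (down G') {#In (Imp a b), Out a#})" using impL.IH(1) impL.prems(1) d(4) by blast
  have P2: "derivable False (fill G' {#In b#})" using impL.IH(2) impL.prems(1) d(3) by blast
  from d(2) consider "I = {#In (Imp a b)#}" | "I = {#In b#}" by auto
  then show ?case
  proof cases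
    case 1
    show ?thesis unfolding d(1) 1
      by (rule derivable.impL[OF P1 P2]) (use nT d(1) 1 in \<open>auto simp: nested_fill_iff\<close>)
  next
    case 2 then show ?thesis using P2 d(1) by simp
  qed
next
  case (impR G a b)
  have nT: "is_nested T" using sim_nested impR.hyps impR.prems by blast
  obtain G' I where d: "T = fill G' I" "imgs (Out (Imp a b)) I" "\<forall>Y. sim Q (fill G Y) (fill G' Y)"
    using sim_dec_single[OF impR.prems(2) _ _ assms(4)] by auto
  have P: "derivable False (fill G' {#In a, Out b#})" using impR.IH(1) impR.prems(1) d(3) by blast
  from d(2) consider "I = {#Out (Imp a b)#}" | "I = {#In a, Out b#}" by auto
  then show ?case
  proof cases
    case 1
    show ?thesis unfolding d(1) 1
      by (rule derivable.impR[OF P]) (use nT d(1) 1 in \<open>auto simp: nested_fill_iff\<close>)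
  next
    case 2 then show ?thesis using P d(1) by simp
  qed
next
  case (boxR G a b)
  have nT: "is_nested T" using sim_nested boxR.hyps boxR.prems by blast
  obtain G' I where d: "T = fill G' I" "imgs (Out (BoxArr a b)) I" "\<forall>Y. sim Q (fill G Y) (fill G' Y)"
    using sim_dec_single[OF boxR.prems(2) _ _ assms(4)] by auto
  have P: "derivable False (fill G' {#Comp a {#Out b#}#})" using boxR.IH(1) boxR.prems(1) d(3) by blast
  from d(2) consider "I = {#Out (BoxArr a b)#}" | "I = {#Comp a {#Out b#}#}" by auto
  then show ?case
  proof cases
    case 1
    show ?thesis unfolding d(1) 1
      by (rule derivable.boxR[OF P]) (use nT d(1) 1 in \<open>auto simp: nested_fill_iff\<close>)
  next
    case 2 then show ?thesis using P d(1) by simp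
  qed
next
  case (diaL G a b)
  have nT: "is_nested T" using sim_nested diaL.hyps diaL.prems by blast
  obtain G' I where d: "T = fill G' I" "imgs (In (DiaArr a b)) I" "\<forall>Y. sim Q (fill G Y) (fill G' Y)"
    using sim_dec_single[OF diaL.prems(2) _ _ assms(4)] by auto
  have P: "derivable False (fill G' {#Comp a {#In b#}#})" using diaL.IH(1) diaL.prems(1) d(3) by blast
  from d(2) consider "I = {#In (DiaArr a b)#}" | "I = {#Comp a {#In b#}#}" by auto
  then show ?case
  proof cases
    case 1
    show ?thesis unfolding d(1) 1
      by (rule derivable.diaL[OF P]) (use nT d(1) 1 in \<open>auto simp: nested_fill_iff\<close>)
  next
    case 2 then show ?thesis using P d(1) by simp
  qed
next
  case (boxL \<phi> \<eta> G \<psi> \<Delta>)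
  have nT: "is_nested T" using sim_nested boxL.hyps boxL.prems by blast
  have e1: "derivable False {#In \<phi>, Out \<eta>#}" using boxL.IH(1) boxL.prems(1) sim_refl[of Q, OF assms(4)] by blast
  have e2: "derivable False {#In \<eta>, Out \<phi>#}" using boxL.IH(2) boxL.prems(1) sim_refl[of Q, OF assms(4)] by blast
  obtain G' \<eta>' B where d: "T = fill G' {#In (BoxArr \<phi> \<psi>), Comp \<eta>' B#}" "Q \<eta> \<eta>'"
     "\<forall>Y N. sim Q (fill G (add_mset (Comp \<eta> (N + \<Delta>)) Y)) (fill G' (add_mset (Comp \<eta>' (N + B)) Y))"
    using sim_dec_comp2[OF boxL.prems(2) _ _ _ assms(4)] by auto
  have "teq \<phi> \<eta>'" using assms(5) d(2) e1 e2 unfolding transport_def teq_def by blast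
  then have e1': "derivable False {#In \<phi>, Out \<eta>'#}" and e2': "derivable False {#In \<eta>', Out \<phi>#}"
    unfolding teq_def by auto
  have "sim Q (fill G (add_mset (Comp \<eta> ({#In \<psi>#} + \<Delta>)) {#In (BoxArr \<phi> \<psi>)#}))
    (fill G' (add_mset (Comp \<eta>' ({#In \<psi>#} + B)) {#In (BoxArr \<phi> \<psi>)#}))" using d(3) by blast
  then have P: "derivable False (fill G' {#In (BoxArr \<phi> \<psi>), Comp \<eta>' ({#In \<psi>#} + B)#})"
    using boxL.IH(3) boxL.prems(1) by (simp add: add_mset_commute)
  show ?case unfolding d(1)
    by (rule derivable.boxL[OF e1' e2' P]) (use nT d(1) in \<open>auto simp: nested_fill_iff\<close>)
next
  case (diaR \<phi> \<eta> G \<psi> \<Delta>)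
  have nT: "is_nested T" using sim_nested diaR.hyps diaR.prems by blast
  have e1: "derivable False {#In \<phi>, Out \<eta>#}" using diaR.IH(1) diaR.prems(1) sim_refl[of Q, OF assms(4)] by blast
  have e2: "derivable False {#In \<eta>, Out \<phi>#}" using diaR.IH(2) diaR.prems(1) sim_refl[of Q, OF assms(4)] by blast
  obtain G' \<eta>' B where d: "T = fill G' {#Out (DiaArr \<phi> \<psi>), Comp \<eta>' B#}" "Q \<eta> \<eta>'"
     "\<forall>Y N. sim Q (fill G (add_mset (Comp \<eta> (N + \<Delta>)) Y)) (fill G' (add_mset (Comp \<eta>' (N + B)) Y))"
    using sim_dec_comp2[OF diaR.prems(2) _ _ _ assms(4)] by auto
  have "teq \<phi> \<eta>'" using assms(5) d(2) e1 e2 unfolding transport_def teq_def by blast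
  then have e1': "derivable False {#In \<phi>, Out \<eta>'#}" and e2': "derivable False {#In \<eta>', Out \<phi>#}"
    unfolding teq_def by auto
  have "sim Q (fill G (add_mset (Comp \<eta> ({#Out \<psi>#} + \<Delta>)) {#}))
    (fill G' (add_mset (Comp \<eta>' ({#Out \<psi>#} + B)) {#}))" using d(3) by blast
  then have P: "derivable False (fill G' {#Comp \<eta>' ({#Out \<psi>#} + B)#})"
    using diaR.IH(3) diaR.prems(1) by simp
  show ?case unfolding d(1)
    by (rule derivable.diaR[OF e1' e2' P]) (use nT d(1) in \<open>auto simp: nested_fill_iff\<close>)
next
  case (cut G \<xi>)
  then show ?case by simp
qed



lemma plus_eq_add_cases:
  assumes "A + X = add_mset c B"
  shows "(\<exists>X0. X = add_mset c X0 \<and> B = A + X0) \<or> (\<exists>A0. A = add_mset c A0 \<and> B = A0 + X)"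
proof (cases "c \<in># X")
  case True
  then obtain X0 where "X = add_mset c X0" by (metis multi_member_split)
  then show ?thesis using assms by auto
next
  case False
  then have "c \<in># A" using assms by (metis union_iff union_single_eq_member)
  then obtain A0 where "A = add_mset c A0" by (metis multi_member_split)
  then show ?thesis using assms by auto
qed

lemma locate:
  "fill H X = fill G Y \<Longrightarrow>
   (\<exists>C. H = hy C Y \<and> G = gx C X) \<or>
   (\<exists>K A B. H = ext K A \<and> G = ext K B \<and> A + X = B + Y) \<or>
   (\<exists>\<eta> C X0. X = add_mset (Comp \<eta> (fill C Y)) X0 \<and> G = comp (ext H X0) (Nest {#} \<eta> C)) \<or>
   (\<exists>\<eta> C Y0. Y = add_mset (Comp \<eta> (fill C X)) Y0 \<and> H = comp (ext G Y0) (Nest {#} \<eta> C))"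
proof (induction H arbitrary: G)
  case (Top A)
  show ?case
  proof (cases G)
    case (Top B)
    then show ?thesis using Top.prems by (intro disjI2 disjI1 exI[of _ "Top {#}"]) auto
  next
    case (Nest B \<eta> C)
    then have "A + X = add_mset (Comp \<eta> (fill C Y)) B" using Top.prems by simp
    from plus_eq_add_cases[OF this] show ?thesis
    proof
      assume "\<exists>X0. X = add_mset (Comp \<eta> (fill C Y)) X0 \<and> B = A + X0"
      then obtain X0 where "X = add_mset (Comp \<eta> (fill C Y)) X0" "B = A + X0" by blast
      then show ?thesis using Nest by (intro disjI2 disjI2 disjI1 exI[of _ \<eta>] exI[of _ C] exI[of _ X0]) auto
    next
      assume "\<exists>A0. A = add_mset (Comp \<eta> (fill C Y)) A0 \<and> B = A0 + X"
      then obtain A0 where "A = add_mset (Comp \<eta> (fill C Y)) A0" "B = A0 + X" by blast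
      then show ?thesis using Nest by (intro disjI1 exI[of _ "Split (Top A0) (Nest {#} \<eta> C)"]) auto
    qed
  qed
next
  case (Nest A \<eta> C)
  show ?case
  proof (cases G)
    case (Top B)
    then have "B + Y = add_mset (Comp \<eta> (fill C X)) A" using Nest.prems by simp
    from plus_eq_add_cases[OF this] show ?thesis
    proof
      assume "\<exists>Y0. Y = add_mset (Comp \<eta> (fill C X)) Y0 \<and> A = B + Y0"
      then obtain Y0 where "Y = add_mset (Comp \<eta> (fill C X)) Y0" "A = B + Y0" by blast
      then show ?thesis using Top by (intro disjI2 disjI2 disjI2 exI[of _ \<eta>] exI[of _ C] exI[of _ Y0]) auto
    next
      assume "\<exists>B0. B = add_mset (Comp \<eta> (fill C X)) B0 \<and> A = B0 + Y"
      then obtain B0 where "B = add_mset (Comp \<eta> (fill C X)) B0" "A = B0 + Y" by blast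
      then show ?thesis using Top by (intro disjI1 exI[of _ "Split (Nest {#} \<eta> C) (Top B0)"]) auto
    qed
  next
    case (Nest B \<eta>' C')
    then have eq: "add_mset (Comp \<eta> (fill C X)) A = add_mset (Comp \<eta>' (fill C' Y)) B"
      using Nest.prems by simp
    show ?thesis
    proof (cases "Comp \<eta> (fill C X) = Comp \<eta>' (fill C' Y)")
      case True
      then have e: "\<eta> = \<eta>'" "fill C X = fill C' Y" "A = B" using eq by auto
      from Nest.IH[OF e(2)] show ?thesis
      proof (elim disjE exE conjE)
        fix C2 assume "C = hy C2 Y" "C' = gx C2 X"
        then show ?thesis using Nest e by (intro disjI1 exI[of _ "Down2 A \<eta> C2"]) auto
      next
        fix K A' B' assume "C = ext K A'" "C' = ext K B'" "A' + X = B' + Y"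
        then show ?thesis using Nest e by (intro disjI2 disjI1 exI[of _ "Nest A \<eta> K"]) auto
      next
        fix \<theta> C0 X0 assume "X = add_mset (Comp \<theta> (fill C0 Y)) X0" "C' = comp (ext C X0) (Nest {#} \<theta> C0)"
        then show ?thesis using Nest e by (intro disjI2 disjI2 disjI1 exI[of _ \<theta>] exI[of _ C0] exI[of _ X0]) auto
      next
        fix \<theta> C0 Y0 assume "Y = add_mset (Comp \<theta> (fill C0 X)) Y0" "C = comp (ext C' Y0) (Nest {#} \<theta> C0)"
        then show ?thesis using Nest e by (intro disjI2 disjI2 disjI2 exI[of _ \<theta>] exI[of _ C0] exI[of _ Y0]) auto
      qed
    next
      case False
      then obtain A0 where "A = add_mset (Comp \<eta>' (fill C' Y)) A0" "B = add_mset (Comp \<eta> (fill C X)) A0"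
        using eq by (auto simp: add_eq_conv_ex)
      then show ?thesis using Nest
        by (intro disjI1 exI[of _ "Split (Nest A0 \<eta> C) (Nest {#} \<eta>' C')"]) auto
    qed
  qed
qed



lemma ext_lvl: "\<exists>C. ext K (A0 + Y) = hy C Y \<and> ext K (A0 + X) = gx C X"
proof (induction K)
  case (Top \<Delta>)
  show ?case by (rule exI[of _ "Split (Top (\<Delta> + A0)) (Top {#})"]) (simp add: ac_simps)
next
  case (Nest \<Delta> \<psi> K)
  then obtain C where "ext K (A0 + Y) = hy C Y \<and> ext K (A0 + X) = gx C X" by blast
  then show ?case by (intro exI[of _ "Down2 \<Delta> \<psi> C"]) simp
qed

lemma locate1:
  assumes "fill H X = fill G {#y#}" "\<forall>a A. y \<noteq> Comp a A"
  shows "(\<exists>X0 K A. X = add_mset y X0 \<and> H = ext K A \<and> G = ext K (A + X0)) \<or>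
    (\<exists>C. H = hy C {#y#} \<and> G = gx C X) \<or>
    (\<exists>\<eta> C X0. X = add_mset (Comp \<eta> (fill C {#y#})) X0 \<and> G = comp (ext H X0) (Nest {#} \<eta> C))"
  using locate[OF assms(1)]
proof (elim disjE exE conjE)
  fix K A B assume h: "H = ext K A" "G = ext K B" "A + X = B + {#y#}"
  then have "A + X = add_mset y B" by simp
  from plus_eq_add_cases[OF this] show ?thesis
  proof (elim disjE exE conjE)
    fix X0 assume "X = add_mset y X0" "B = A + X0"
    then show ?thesis using h by blast
  next
    fix A0 assume a: "A = add_mset y A0" "B = A0 + X"
    obtain C where "ext K (A0 + {#y#}) = hy C {#y#} \<and> ext K (A0 + X) = gx C X" using ext_lvl by blast
    then show ?thesis using h a by auto
  qed
next
  fix \<eta> C Y0 assume "{#y#} = add_mset (Comp \<eta> (fill C X)) Y0"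
  then show ?thesis using assms(2) by auto
qed blast+

section \<open>Lifting decompositions of down G to G\<close>

lemma strip_split:
  "strip M = A + B \<Longrightarrow> \<exists>M1 M2. M = M1 + M2 \<and> strip M1 = A \<and> strip M2 = B"
proof (induction M arbitrary: A B)
  case empty
  then show ?case by simp
next
  case (add x M)
  show ?case
  proof (cases "is_out x")
    case True
    then have "strip M = A + B" using add.prems by simp
    from add.IH[OF this] obtain M1 M2 where "M = M1 + M2" "strip M1 = A" "strip M2 = B" by blast
    then show ?thesis using True by (intro exI[of _ "add_mset x M1"] exI[of _ M2]) simp
  next
    case False
    then have e: "add_mset (strip_item x) (strip M) = A + B" using add.prems by simp
    show ?thesis
    proof (cases "strip_item x \<in># A")
      case True
      then obtain A' where A: "A = add_mset (strip_item x) A'" by (metis multi_member_split)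
      then have "strip M = A' + B" using e by simp
      from add.IH[OF this] obtain M1 M2 where "M = M1 + M2" "strip M1 = A'" "strip M2 = B" by blast
      then show ?thesis using False A by (intro exI[of _ "add_mset x M1"] exI[of _ M2]) simp
    next
      case F2: False
      then have "strip_item x \<in># B" using e by (metis union_iff union_single_eq_member)
      then obtain B' where B: "B = add_mset (strip_item x) B'" by (metis multi_member_split)
      then have "strip M = A + B'" using e by simp
      from add.IH[OF this] obtain M1 M2 where "M = M1 + M2" "strip M1 = A" "strip M2 = B'" by blast
      then show ?thesis using False B by (intro exI[of _ M1] exI[of _ "add_mset x M2"]) simp
    qed
  qed
qed


definition nout :: "'a seq \<Rightarrow> bool" where "nout M \<longleftrightarrow> (\<forall>x\<in>#M. \<not> is_out x)"

lemma strip_add_inv: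
  "strip M = add_mset y Y \<Longrightarrow> \<exists>x M'. M = add_mset x M' \<and> \<not> is_out x \<and> strip_item x = y \<and> strip M' = Y"
proof (induction M arbitrary: Y)
  case empty then show ?case by simp
next
  case (add x M)
  show ?case
  proof (cases "is_out x")
    case True
    then have "strip M = add_mset y Y" using add.prems by simp
    from add.IH[OF this] obtain x' M' where "M = add_mset x' M'" "\<not> is_out x'" "strip_item x' = y" "strip M' = Y" by blast
    then show ?thesis using True by (intro exI[of _ x'] exI[of _ "add_mset x M'"]) (auto simp: add_mset_commute)
  next
    case False
    then have e: "add_mset (strip_item x) (strip M) = add_mset y Y" using add.prems by simp
    show ?thesis
    proof (cases "strip_item x = y")
      case True then show ?thesis using e False by auto
    next
      case F2: False
      then obtain K where K: "strip M = add_mset y K" "Y = add_mset (strip_item x) K" using e by (auto simp: add_eq_conv_ex)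
      from add.IH[OF K(1)] obtain x' M' where "M = add_mset x' M'" "\<not> is_out x'" "strip_item x' = y" "strip M' = K" by blast
      then show ?thesis using False K by (intro exI[of _ x'] exI[of _ "add_mset x M'"]) (auto simp: add_mset_commute)
    qed
  qed
qed

lemma strip_empty_inv: "strip M = {#} \<Longrightarrow> \<forall>x\<in>#M. is_out x"
  by (induction M) (auto split: if_splits)

lemma strip_item_eq_In: "strip_item x = In a \<Longrightarrow> x = In a"
  by (cases x) auto
lemma strip_item_eq_Comp: "strip_item x = Comp \<eta> \<Delta> \<Longrightarrow> \<exists>\<Delta>'. x = Comp \<eta> \<Delta>' \<and> strip \<Delta>' = \<Delta>"
  by (cases x) auto

lemma strip_filter_nout: "strip (filter_mset (\<lambda>x. \<not> is_out x) M) = strip M"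
  by (induction M) auto
lemma strip_filter_out: "strip (filter_mset is_out M) = {#}"
  by (induction M) auto
lemma nout_filter: "nout (filter_mset (\<lambda>x. \<not> is_out x) M)"
  by (simp add: nout_def)

lemma L_fill: "strip M = fill K X \<Longrightarrow> \<exists>K' X'. M = fill K' X' \<and> down K' = K \<and> strip X' = X \<and> nout X'"
proof (induction K arbitrary: M)
  case (Top \<Delta>)
  then have "strip M = \<Delta> + X" by simp
  from strip_split[OF this] obtain M1 M2 where m: "M = M1 + M2" "strip M1 = \<Delta>" "strip M2 = X" by blast
  let ?X' = "filter_mset (\<lambda>x. \<not> is_out x) M2" and ?O = "filter_mset is_out M2"
  have "M2 = ?X' + ?O" by (metis multiset_partition add.commute)
  then show ?case using m strip_filter_nout[of M2] strip_filter_out[of M2] nout_filter[of M2]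
    by (intro exI[of _ "Top (M1 + ?O)"] exI[of _ ?X']) (auto simp: ac_simps)
next
  case (Nest \<Delta> \<psi> K)
  then have "strip M = \<Delta> + {#Comp \<psi> (fill K X)#}" by simp
  from strip_split[OF this] obtain M1 M2 where m: "M = M1 + M2" "strip M1 = \<Delta>" "strip M2 = {#Comp \<psi> (fill K X)#}" by blast
  from strip_add_inv[of M2 "Comp \<psi> (fill K X)" "{#}"] m(3)
  obtain x Os where o: "M2 = add_mset x Os" "strip_item x = Comp \<psi> (fill K X)" "strip Os = {#}" by auto
  from strip_item_eq_Comp[OF o(2)] obtain N where N: "x = Comp \<psi> N" "strip N = fill K X" by blast
  from Nest.IH[OF N(2)] obtain K' X' where k: "N = fill K' X'" "down K' = K" "strip X' = X" "nout X'" by blast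
  show ?case using m o N k
    by (intro exI[of _ "Nest (M1 + Os) \<psi> K'"] exI[of _ X']) (auto simp: ac_simps)
qed

lemma L_topadd: "down G = topadd K M \<Longrightarrow> \<exists>K' M'. G = topadd K' M' \<and> down K' = K \<and> strip M' = M"
proof (cases G)
  case (Top \<Delta>)
  assume h: "down G = topadd K M"
  then obtain \<Delta>k where K: "K = Top \<Delta>k" using Top by (cases K) auto
  then have "strip \<Delta> = \<Delta>k + M" using h Top by simp
  from strip_split[OF this] obtain M1 M2 where "\<Delta> = M1 + M2" "strip M1 = \<Delta>k" "strip M2 = M" by blast
  then show ?thesis using Top K by (intro exI[of _ "Top M1"] exI[of _ M2]) auto
next
  case (Nest \<Delta> \<psi> C)
  assume h: "down G = topadd K M"
  then obtain \<Delta>k Ck where K: "K = Nest \<Delta>k \<psi> Ck" "down C = Ck" using Nest by (cases K) auto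
  then have "strip \<Delta> = \<Delta>k + M" using h Nest by simp
  from strip_split[OF this] obtain M1 M2 where "\<Delta> = M1 + M2" "strip M1 = \<Delta>k" "strip M2 = M" by blast
  then show ?thesis using Nest K by (intro exI[of _ "Nest M1 \<psi> C"] exI[of _ M2]) auto
qed

lemma L_nest: "down K = Nest \<Delta> \<eta> C \<Longrightarrow> \<exists>\<Delta>' C'. K = Nest \<Delta>' \<eta> C' \<and> strip \<Delta>' = \<Delta> \<and> down C' = C"
  by (cases K) auto

lemma L_gx: "down G = gx C X \<Longrightarrow> \<exists>C' X'. G = gx C' X' \<and> down2 C' = C \<and> strip X' = X \<and> nout X'"
proof (induction C arbitrary: G)
  case (Split K1 K2)
  then have "down G = topadd K2 (fill K1 X)" by simp
  from L_topadd[OF this] obtain K2' M' where a: "G = topadd K2' M'" "down K2' = K2" "strip M' = fill K1 X" by blast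
  from L_fill[OF a(3)] obtain K1' X' where b: "M' = fill K1' X'" "down K1' = K1" "strip X' = X" "nout X'" by blast
  show ?case using a b by (intro exI[of _ "Split K1' K2'"] exI[of _ X']) auto
next
  case (Down2 \<Delta> \<psi> C)
  then have "down G = Nest \<Delta> \<psi> (gx C X)" by simp
  from L_nest[OF this] obtain \<Delta>' C1 where a: "G = Nest \<Delta>' \<psi> C1" "strip \<Delta>' = \<Delta>" "down C1 = gx C X" by blast
  from Down2.IH[OF a(3)] obtain C' X' where b: "C1 = gx C' X'" "down2 C' = C" "strip X' = X" "nout X'" by blast
  show ?case using a b by (intro exI[of _ "Down2 \<Delta>' \<psi> C'"] exI[of _ X']) auto
qed

lemma L_ext: "down K = ext H M \<Longrightarrow> \<exists>H' M'. K = ext H' M' \<and> down H' = H \<and> strip M' = M \<and> nout M'"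
proof (induction H arbitrary: K)
  case (Top \<Delta>)
  then obtain \<Delta>k where K: "K = Top \<Delta>k" by (cases K) auto
  then have "strip \<Delta>k = \<Delta> + M" using Top by simp
  from strip_split[OF this] obtain M1 M2 where m: "\<Delta>k = M1 + M2" "strip M1 = \<Delta>" "strip M2 = M" by blast
  let ?X' = "filter_mset (\<lambda>x. \<not> is_out x) M2" and ?O = "filter_mset is_out M2"
  have "M2 = ?X' + ?O" by (metis multiset_partition add.commute)
  then show ?case using K m strip_filter_nout[of M2] strip_filter_out[of M2] nout_filter[of M2]
    by (intro exI[of _ "Top (M1 + ?O)"] exI[of _ ?X']) (auto simp: ac_simps)
next
  case (Nest \<Delta> \<psi> C)
  then obtain \<Delta>k Ck where K: "K = Nest \<Delta>k \<psi> Ck" "strip \<Delta>k = \<Delta>" "down Ck = ext C M" by (cases K) auto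
  from Nest.IH[OF K(3)] obtain H' M' where "Ck = ext H' M'" "down H' = C" "strip M' = M" "nout M'" by blast
  then show ?case using K by (intro exI[of _ "Nest \<Delta>k \<psi> H'"] exI[of _ M']) auto
qed

lemma L_comp: "down G = comp K1 K2 \<Longrightarrow> \<exists>K1' K2'. G = comp K1' K2' \<and> down K1' = K1 \<and> down K2' = K2"
proof (induction K1 arbitrary: G)
  case (Top \<Delta>)
  then have "down G = topadd K2 \<Delta>" by simp
  from L_topadd[OF this] obtain K' M' where "G = topadd K' M'" "down K' = K2" "strip M' = \<Delta>" by blast
  then show ?case by (intro exI[of _ "Top M'"] exI[of _ K']) auto
next
  case (Nest \<Delta> \<psi> C)
  then have "down G = Nest \<Delta> \<psi> (comp C K2)" by simp
  from L_nest[OF this] obtain \<Delta>' C1 where a: "G = Nest \<Delta>' \<psi> C1" "strip \<Delta>' = \<Delta>" "down C1 = comp C K2" by blast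
  from Nest.IH[OF a(3)] obtain K1' K2' where "C1 = comp K1' K2'" "down K1' = C" "down K2' = K2" by blast
  then show ?case using a by (intro exI[of _ "Nest \<Delta>' \<psi> K1'"] exI[of _ K2']) auto
qed

lemma comp_Nest_ext: "comp K1 (Nest \<Delta> \<eta> C) = comp (ext K1 \<Delta>) (Nest {#} \<eta> C)"
  by (induction K1) (auto simp: ac_simps)

lemma L_deep: "down G = comp (ext H X0) (Nest {#} \<eta> C0) \<Longrightarrow>
  \<exists>H' X0' C0'. G = comp (ext H' X0') (Nest {#} \<eta> C0') \<and> down H' = H \<and> strip X0' = X0 \<and> nout X0' \<and> down C0' = C0"
proof -
  assume "down G = comp (ext H X0) (Nest {#} \<eta> C0)"
  from L_comp[OF this] obtain K1 K2 where a: "G = comp K1 K2" "down K1 = ext H X0" "down K2 = Nest {#} \<eta> C0" by blast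
  from L_ext[OF a(2)] obtain H' X0' where b: "K1 = ext H' X0'" "down H' = H" "strip X0' = X0" "nout X0'" by blast
  from L_nest[OF a(3)] obtain \<Delta>k C0' where c: "K2 = Nest \<Delta>k \<eta> C0'" "strip \<Delta>k = {#}" "down C0' = C0" by blast
  have "G = comp (ext (ext H' \<Delta>k) X0') (Nest {#} \<eta> C0')"
    using a(1) b(1) c(1) comp_Nest_ext[of "ext H' X0'" \<Delta>k \<eta> C0'] by (simp add: ac_simps)
  moreover have "down (ext H' \<Delta>k) = H" using b(2) c(2) by simp
  ultimately show ?thesis using b c by blast
qed

lemma hl_mem_ext: "x \<in># hl G \<Longrightarrow> \<exists>G0. G = ext G0 {#x#}"
proof (induction G)
  case (Top \<Delta>)
  then obtain R where "\<Delta> = add_mset x R" by (metis hl.simps(1) multi_member_split)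
  then show ?case by (intro exI[of _ "Top R"]) simp
next
  case (Nest \<Delta> \<psi> C)
  then obtain G0 where "C = ext G0 {#x#}" by auto
  then show ?case by (intro exI[of _ "Nest \<Delta> \<psi> G0"]) simp
qed

lemma ext_cancel: "ext K1 (add_mset x M) = ext K2 (add_mset x N) \<Longrightarrow> ext K1 M = ext K2 N"
proof (induction K1 arbitrary: K2)
  case (Top \<Delta>)
  then obtain \<Delta>2 where "K2 = Top \<Delta>2" by (cases K2) auto
  then show ?case using Top by simp
next
  case (Nest \<Delta> \<psi> C)
  then obtain C2 where "K2 = Nest \<Delta> \<psi> C2" "ext C (add_mset x M) = ext C2 (add_mset x N)" by (cases K2) auto
  then show ?case using Nest.IH by simp
qed

lemma strip_item_eq_In': "In a = strip_item x \<Longrightarrow> x = In a"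
  by (cases x) auto
lemma strip_item_eq_Comp': "Comp \<eta> \<Delta> = strip_item x \<Longrightarrow> \<exists>\<Delta>'. x = Comp \<eta> \<Delta>' \<and> strip \<Delta>' = \<Delta>"
  by (cases x) auto

lemma strip_mem_In: "In a \<in># strip M \<Longrightarrow> In a \<in># M"
  by (induction M) (auto split: if_splits dest: strip_item_eq_In')

lemma strip_mem_Comp: "Comp \<eta> \<Delta> \<in># strip M \<Longrightarrow> \<exists>\<Delta>'. Comp \<eta> \<Delta>' \<in># M \<and> strip \<Delta>' = \<Delta>"
  by (induction M) (auto split: if_splits dest!: strip_item_eq_Comp')



definition CUT :: "'a fm \<Rightarrow> bool" where
  "CUT \<xi> \<longleftrightarrow> (\<forall>G. derivable False (fill (down G) {#Out \<xi>#}) \<longrightarrow> derivable False (fill G {#In \<xi>#}) \<longrightarrow>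
      is_nested (fill G {#}) \<longrightarrow> derivable False (fill G {#}))"

lemma CUTD: "CUT \<xi> \<Longrightarrow> derivable False (fill (down G) {#Out \<xi>#}) \<Longrightarrow> derivable False (fill G {#In \<xi>#}) \<Longrightarrow>
      is_nested (fill G {#}) \<Longrightarrow> derivable False (fill G {#})"
  unfolding CUT_def by blast

lemma transport_eq: "transport (=)"
  unfolding transport_def by simp

lemma adm_eq: "derivable False S \<Longrightarrow> sim (=) S T \<Longrightarrow> derivable False T"
  using sim_adm[of False S "(=)" T] transport_eq by auto

lemma sim_eq_refl: "sim (=) S S" by (rule sim_refl) simp

lemma wk_fill: "derivable False (fill K X) \<Longrightarrow> outs E = 0 \<Longrightarrow> derivable False (fill K (X + E))"
  by (rule adm_eq, assumption, rule sim_fill_mono) (auto intro: sim_extra sim_eq_refl)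

lemma wk: "derivable False S \<Longrightarrow> outs E = 0 \<Longrightarrow> derivable False (S + E)"
  using wk_fill[of "Top {#}" S E] by simp

lemma sim_single: "imgs x I \<Longrightarrow> sim Q {#x#} I"
proof -
  assume "imgs x I"
  then have "sim Q (add_mset x {#}) (I + {#})" by (rule s_item) (rule sim_empty_iff)
  then show ?thesis by simp
qed

lemma inv_fill: "derivable False (fill K (add_mset x M)) \<Longrightarrow> imgs x I \<Longrightarrow> derivable False (fill K (I + M))"
  by (rule adm_eq, assumption, rule sim_fill_mono)
     (auto intro: sim_eq_refl s_item[of x I "(=)" M M, simplified])

lemma transport_pair:
  assumes "CUT a" "derivable False {#In a, Out \<eta>#}" "derivable False {#In \<eta>, Out a#}"
  shows "transport (\<lambda>x y. x = y \<or> (x = a \<and> y = \<eta>))"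
  unfolding transport_def
proof (intro allI impI)
  fix x y c assume q: "x = y \<or> (x = a \<and> y = \<eta>)" and t: "teq c x"
  show "teq c y"
  proof (cases "x = y")
    case True then show ?thesis using t by simp
  next
    case False
    then have xy: "x = a" "y = \<eta>" using q by auto
    have c1: "derivable False {#In c, Out a#}" "derivable False {#In a, Out c#}" using t xy unfolding teq_def by auto
    have g1: "derivable False (fill (Top {#In c, Out \<eta>#}) {#})"
    proof (rule CUTD[OF assms(1)])
      show "derivable False (fill (down (Top {#In c, Out \<eta>#})) {#Out a#})" using c1(1) by (simp add: add_mset_commute)
      have "derivable False ({#In a, Out \<eta>#} + {#In c#})" by (rule wk[OF assms(2)]) simp
      then show "derivable False (fill (Top {#In c, Out \<eta>#}) {#In a#})" by (simp add: add_mset_commute)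
      show "is_nested (fill (Top {#In c, Out \<eta>#}) {#})" by (simp add: is_nested_def)
    qed
    have g2: "derivable False (fill (Top {#In \<eta>, Out c#}) {#})"
    proof (rule CUTD[OF assms(1)])
      show "derivable False (fill (down (Top {#In \<eta>, Out c#})) {#Out a#})" using assms(3) by (simp add: add_mset_commute)
      have "derivable False ({#In a, Out c#} + {#In \<eta>#})" by (rule wk[OF c1(2)]) simp
      then show "derivable False (fill (Top {#In \<eta>, Out c#}) {#In a#})" by (simp add: add_mset_commute)
      show "is_nested (fill (Top {#In \<eta>, Out c#}) {#})" by (simp add: is_nested_def)
    qed
    show ?thesis using g1 g2 xy unfolding teq_def by simp
  qed
qed

lemma merge_adm:
  assumes "CUT a" "derivable False {#In a, Out \<eta>#}" "derivable False {#In \<eta>, Out a#}"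
    and "derivable False (fill K {#Comp a A, Comp \<eta> B#})"
  shows "derivable False (fill K {#Comp \<eta> (A + B)#})"
proof -
  let ?Q = "\<lambda>x y. x = y \<or> (x = a \<and> y = \<eta>)"
  have r: "\<And>x. ?Q x x" by simp
  have AB: "sim ?Q (A + B) (A + B)" by (rule sim_refl) simp
  have "sim ?Q (add_mset (Comp a A) (add_mset (Comp \<eta> B) {#})) (add_mset (Comp \<eta> (A + B)) {#})"
    by (rule s_merge[OF AB]) (auto intro: sim_empty_iff)
  then have "sim ?Q {#Comp a A, Comp \<eta> B#} {#Comp \<eta> (A + B)#}" by simp
  then have "sim ?Q (fill K {#Comp a A, Comp \<eta> B#}) (fill K {#Comp \<eta> (A + B)#})"
    by (rule sim_fill_mono[OF r])
  then show ?thesis using sim_adm[OF assms(4) _ _ r transport_pair[OF assms(1-3)]] by simp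
qed

lemma cut_conj:
  assumes "CUT a" "CUT b" shows "CUT (Conj a b)"
  unfolding CUT_def
proof (intro allI impI)
  fix G assume D: "derivable False (fill (down G) {#Out (Conj a b)#})"
    and E: "derivable False (fill G {#In (Conj a b)#})" and n: "is_nested (fill G {#})"
  have Da: "derivable False (fill (down G) {#Out a#})" using inv_fill[OF D, of "{#Out a#}"] by simp
  have Db: "derivable False (fill (down G) {#Out b#})" using inv_fill[OF D, of "{#Out b#}"] by simp
  have Eab: "derivable False (fill G {#In a, In b#})" using inv_fill[OF E, of "{#In a, In b#}"] by simp
  have Eb: "derivable False (fill G {#In b#})"
  proof -
    have "derivable False (fill (ext G {#In b#}) {#})"
    proof (rule CUTD[OF assms(1)])
      show "derivable False (fill (down (ext G {#In b#})) {#Out a#})"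
        using wk_fill[OF Da, of "{#In b#}"] by (simp add: ac_simps)
      show "derivable False (fill (ext G {#In b#}) {#In a#})" using Eab by (simp add: add_mset_commute)
      show "is_nested (fill (ext G {#In b#}) {#})" using n by (simp add: is_nested_def)
    qed
    then show ?thesis by simp
  qed
  show "derivable False (fill G {#})" by (rule CUTD[OF assms(2) Db Eb n])
qed



lemma sim_comp_wk: "outs E = 0 \<Longrightarrow> sim (=) (add_mset (Comp \<eta> N) M) (add_mset (Comp \<eta> (E + N)) M)"
proof -
  assume "outs E = 0"
  then have "sim (=) N (E + N)" using sim_extra[OF sim_eq_refl[of N] \<open>outs E = 0\<close>] by (simp add: add.commute)
  then show ?thesis by (rule s_comp) (auto intro: sim_eq_refl)
qed

lemma wk_comp: "derivable False (fill K (add_mset (Comp \<eta> N) M)) \<Longrightarrow> outs E = 0 \<Longrightarrow>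
   derivable False (fill K (add_mset (Comp \<eta> (E + N)) M))"
  by (rule adm_eq, assumption, rule sim_fill_mono) (auto intro: sim_comp_wk)

lemma E_step:
  assumes IH: "\<And>G. fill (hy C {#In \<xi>#}) Xp = fill G {#In \<xi>#} \<Longrightarrow> derivable False (fill (down G) {#Out \<xi>#}) \<Longrightarrow>
     is_nested (fill G {#}) \<Longrightarrow> derivable False (fill G {#})"
  and D: "derivable False (fill2 (down2 C) (strip Xr) {#Out \<xi>#})"
  and s: "sim (=) (strip Xr) (strip Xp)"
  and n: "is_nested (fill2 C Xp {#})"
  shows "derivable False (fill2 C Xp {#})"
proof -
  have "derivable False (fill (gx C Xp) {#})"
  proof (rule IH)
    show "fill (hy C {#In \<xi>#}) Xp = fill (gx C Xp) {#In \<xi>#}" by simp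
    show "derivable False (fill (down (gx C Xp)) {#Out \<xi>#})"
      using adm_eq[OF D sim_fill2_mono[OF _ s]] by simp
    show "is_nested (fill (gx C Xp) {#})" using n by simp
  qed
  then show ?thesis by simp
qed

lemma hy_gx_empty: "fill (gx C X) {#} = fill (hy C {#}) X" by simp

lemma cutE:
  assumes ca: "CUT a" and cb: "CUT b" and xi: "\<xi> = Imp a b \<or> \<xi> = BoxArr a b"
  shows "derivable c U \<Longrightarrow> \<not> c \<Longrightarrow> U = fill G {#In \<xi>#} \<Longrightarrow> derivable False (fill (down G) {#Out \<xi>#}) \<Longrightarrow>
     is_nested (fill G {#}) \<Longrightarrow> derivable False (fill G {#})"
proof (induction arbitrary: G rule: derivable.induct)
  case (init H p G)
  from locate1[OF init.prems(2)]
  consider (P) X0 where "{#In (Atom p), Out (Atom p)#} = add_mset (In \<xi>) X0"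
    | (N) C where "H = hy C {#In \<xi>#}" "G = gx C {#In (Atom p), Out (Atom p)#}"
    | (Dp) \<eta> C X0 where "{#In (Atom p), Out (Atom p)#} = add_mset (Comp \<eta> (fill C {#In \<xi>#})) X0"
    by auto
  then show ?case
  proof cases
    case P then show ?thesis using xi by (auto simp: add_eq_conv_ex)
  next
    case Dp then show ?thesis by (auto simp: add_eq_conv_ex)
  next
    case N
    show ?thesis unfolding N hy_gx_empty
      by (rule derivable.init) (use init.prems(4) N in \<open>simp add: is_nested_def\<close>)
  qed
next
  case (botL H G)
  from locate1[OF botL.prems(2)]
  consider (P) X0 where "{#In Bot#} = add_mset (In \<xi>) X0"
    | (N) C where "H = hy C {#In \<xi>#}" "G = gx C {#In Bot#}"
    | (Dp) \<eta> C X0 where "{#In Bot#} = add_mset (Comp \<eta> (fill C {#In \<xi>#})) X0"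
    by auto
  then show ?case
  proof cases
    case P then show ?thesis using xi by (auto simp: add_eq_conv_ex)
  next
    case Dp then show ?thesis by (auto simp: add_eq_conv_ex)
  next
    case N
    show ?thesis unfolding N hy_gx_empty
      by (rule derivable.botL) (use botL.prems(4) N in \<open>simp add: is_nested_def\<close>)
  qed
next
  case (conjL H \<phi> \<psi> G)
  from locate1[OF conjL.prems(2)]
  consider (P) X0 where "{#In (Conj \<phi> \<psi>)#} = add_mset (In \<xi>) X0"
    | (N) C where "H = hy C {#In \<xi>#}" "G = gx C {#In (Conj \<phi> \<psi>)#}"
    | (Dp) \<eta> C X0 where "{#In (Conj \<phi> \<psi>)#} = add_mset (Comp \<eta> (fill C {#In \<xi>#})) X0"
    by auto
  then show ?case
  proof cases
    case P then show ?thesis using xi by (auto simp: add_eq_conv_ex)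
  next
    case Dp then show ?thesis by (auto simp: add_eq_conv_ex)
  next
    case N
    have P1: "derivable False (fill2 C {#In \<phi>, In \<psi>#} {#})"
      by (rule E_step[where Xr="{#In (Conj \<phi> \<psi>)#}", OF conjL.IH[OF conjL.prems(1), unfolded N(1)]])
         (use conjL.prems(3,4) N in \<open>auto simp: is_nested_def intro: sim_single\<close>)
    show ?thesis unfolding N hy_gx_empty
      by (rule derivable.conjL) (use P1 conjL.prems(4) N in \<open>simp_all add: is_nested_def\<close>)
  qed
next
  case (conjR H \<phi> \<psi> G)
  from locate1[OF conjR.prems(2)]
  consider (P) X0 where "{#Out (Conj \<phi> \<psi>)#} = add_mset (In \<xi>) X0"
    | (N) C where "H = hy C {#In \<xi>#}" "G = gx C {#Out (Conj \<phi> \<psi>)#}"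
    | (Dp) \<eta> C X0 where "{#Out (Conj \<phi> \<psi>)#} = add_mset (Comp \<eta> (fill C {#In \<xi>#})) X0"
    by auto
  then show ?case
  proof cases
    case P then show ?thesis by (auto simp: add_eq_conv_ex)
  next
    case Dp then show ?thesis by (auto simp: add_eq_conv_ex)
  next
    case N
    have P1: "derivable False (fill2 C {#Out \<phi>#} {#})"
      by (rule E_step[where Xr="{#Out (Conj \<phi> \<psi>)#}", OF conjR.IH(1)[OF conjR.prems(1), unfolded N(1)]])
         (use conjR.prems(3,4) N in \<open>auto simp: is_nested_def intro: sim_empty_iff\<close>)
    have P2: "derivable False (fill2 C {#Out \<psi>#} {#})"
      by (rule E_step[where Xr="{#Out (Conj \<phi> \<psi>)#}", OF conjR.IH(2)[OF conjR.prems(1), unfolded N(1)]])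
         (use conjR.prems(3,4) N in \<open>auto simp: is_nested_def intro: sim_empty_iff\<close>)
    show ?thesis unfolding N hy_gx_empty
      by (rule derivable.conjR) (use P1 P2 conjR.prems(4) N in \<open>simp_all add: is_nested_def\<close>)
  qed
next
  case (disjL H \<phi> \<psi> G)
  from locate1[OF disjL.prems(2)]
  consider (P) X0 where "{#In (Disj \<phi> \<psi>)#} = add_mset (In \<xi>) X0"
    | (N) C where "H = hy C {#In \<xi>#}" "G = gx C {#In (Disj \<phi> \<psi>)#}"
    | (Dp) \<eta> C X0 where "{#In (Disj \<phi> \<psi>)#} = add_mset (Comp \<eta> (fill C {#In \<xi>#})) X0"
    by auto
  then show ?case
  proof cases
    case P then show ?thesis using xi by (auto simp: add_eq_conv_ex)
  next
    case Dp then show ?thesis by (auto simp: add_eq_conv_ex)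
  next
    case N
    have P1: "derivable False (fill2 C {#In \<phi>#} {#})"
      by (rule E_step[where Xr="{#In (Disj \<phi> \<psi>)#}", OF disjL.IH(1)[OF disjL.prems(1), unfolded N(1)]])
         (use disjL.prems(3,4) N in \<open>auto simp: is_nested_def intro: sim_single\<close>)
    have P2: "derivable False (fill2 C {#In \<psi>#} {#})"
      by (rule E_step[where Xr="{#In (Disj \<phi> \<psi>)#}", OF disjL.IH(2)[OF disjL.prems(1), unfolded N(1)]])
         (use disjL.prems(3,4) N in \<open>auto simp: is_nested_def intro: sim_single\<close>)
    show ?thesis unfolding N hy_gx_empty
      by (rule derivable.disjL) (use P1 P2 disjL.prems(4) N in \<open>simp_all add: is_nested_def\<close>)
  qed
next
  case (disjR1 H \<phi> \<psi> G)
  from locate1[OF disjR1.prems(2)]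
  consider (P) X0 where "{#Out (Disj \<phi> \<psi>)#} = add_mset (In \<xi>) X0"
    | (N) C where "H = hy C {#In \<xi>#}" "G = gx C {#Out (Disj \<phi> \<psi>)#}"
    | (Dp) \<eta> C X0 where "{#Out (Disj \<phi> \<psi>)#} = add_mset (Comp \<eta> (fill C {#In \<xi>#})) X0"
    by auto
  then show ?case
  proof cases
    case P then show ?thesis by (auto simp: add_eq_conv_ex)
  next
    case Dp then show ?thesis by (auto simp: add_eq_conv_ex)
  next
    case N
    have P1: "derivable False (fill2 C {#Out \<phi>#} {#})"
      by (rule E_step[where Xr="{#Out (Disj \<phi> \<psi>)#}", OF disjR1.IH[OF disjR1.prems(1), unfolded N(1)]])
         (use disjR1.prems(3,4) N in \<open>auto simp: is_nested_def intro: sim_empty_iff\<close>)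
    show ?thesis unfolding N hy_gx_empty
      by (rule derivable.disjR1) (use P1 disjR1.prems(4) N in \<open>simp_all add: is_nested_def\<close>)
  qed
next
  case (disjR2 H \<psi> \<phi> G)
  from locate1[OF disjR2.prems(2)]
  consider (P) X0 where "{#Out (Disj \<phi> \<psi>)#} = add_mset (In \<xi>) X0"
    | (N) C where "H = hy C {#In \<xi>#}" "G = gx C {#Out (Disj \<phi> \<psi>)#}"
    | (Dp) \<eta> C X0 where "{#Out (Disj \<phi> \<psi>)#} = add_mset (Comp \<eta> (fill C {#In \<xi>#})) X0"
    by auto
  then show ?case
  proof cases
    case P then show ?thesis by (auto simp: add_eq_conv_ex)
  next
    case Dp then show ?thesis by (auto simp: add_eq_conv_ex)
  next
    case N
    have P1: "derivable False (fill2 C {#Out \<psi>#} {#})"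
      by (rule E_step[where Xr="{#Out (Disj \<phi> \<psi>)#}", OF disjR2.IH[OF disjR2.prems(1), unfolded N(1)]])
         (use disjR2.prems(3,4) N in \<open>auto simp: is_nested_def intro: sim_empty_iff\<close>)
    show ?thesis unfolding N hy_gx_empty
      by (rule derivable.disjR2) (use P1 disjR2.prems(4) N in \<open>simp_all add: is_nested_def\<close>)
  qed
next
  case (impR H \<phi> \<psi> G)
  from locate1[OF impR.prems(2)]
  consider (P) X0 where "{#Out (Imp \<phi> \<psi>)#} = add_mset (In \<xi>) X0"
    | (N) C where "H = hy C {#In \<xi>#}" "G = gx C {#Out (Imp \<phi> \<psi>)#}"
    | (Dp) \<eta> C X0 where "{#Out (Imp \<phi> \<psi>)#} = add_mset (Comp \<eta> (fill C {#In \<xi>#})) X0"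
    by auto
  then show ?case
  proof cases
    case P then show ?thesis by (auto simp: add_eq_conv_ex)
  next
    case Dp then show ?thesis by (auto simp: add_eq_conv_ex)
  next
    case N
    have P1: "derivable False (fill2 C {#In \<phi>, Out \<psi>#} {#})"
      by (rule E_step[where Xr="{#Out (Imp \<phi> \<psi>)#}", OF impR.IH[OF impR.prems(1), unfolded N(1)]])
         (use impR.prems(3,4) N in \<open>auto simp: is_nested_def intro: s_empty\<close>)
    show ?thesis unfolding N hy_gx_empty
      by (rule derivable.impR) (use P1 impR.prems(4) N in \<open>simp_all add: is_nested_def\<close>)
  qed
next
  case (boxR H \<phi> \<psi> G)
  from locate1[OF boxR.prems(2)]
  consider (P) X0 where "{#Out (BoxArr \<phi> \<psi>)#} = add_mset (In \<xi>) X0"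
    | (N) C where "H = hy C {#In \<xi>#}" "G = gx C {#Out (BoxArr \<phi> \<psi>)#}"
    | (Dp) \<eta> C X0 where "{#Out (BoxArr \<phi> \<psi>)#} = add_mset (Comp \<eta> (fill C {#In \<xi>#})) X0"
    by auto
  then show ?case
  proof cases
    case P then show ?thesis by (auto simp: add_eq_conv_ex)
  next
    case Dp then show ?thesis by (auto simp: add_eq_conv_ex)
  next
    case N
    have P1: "derivable False (fill2 C {#Comp \<phi> {#Out \<psi>#}#} {#})"
      by (rule E_step[where Xr="{#Out (BoxArr \<phi> \<psi>)#}", OF boxR.IH[OF boxR.prems(1), unfolded N(1)]])
         (use boxR.prems(3,4) N in \<open>auto simp: is_nested_def intro: s_empty\<close>)
    show ?thesis unfolding N hy_gx_empty
      by (rule derivable.boxR) (use P1 boxR.prems(4) N in \<open>simp_all add: is_nested_def\<close>)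
  qed
next
  case (diaL H \<phi> \<psi> G)
  from locate1[OF diaL.prems(2)]
  consider (P) X0 where "{#In (DiaArr \<phi> \<psi>)#} = add_mset (In \<xi>) X0"
    | (N) C where "H = hy C {#In \<xi>#}" "G = gx C {#In (DiaArr \<phi> \<psi>)#}"
    | (Dp) \<eta> C X0 where "{#In (DiaArr \<phi> \<psi>)#} = add_mset (Comp \<eta> (fill C {#In \<xi>#})) X0"
    by auto
  then show ?case
  proof cases
    case P then show ?thesis using xi by (auto simp: add_eq_conv_ex)
  next
    case Dp then show ?thesis by (auto simp: add_eq_conv_ex)
  next
    case N
    have P1: "derivable False (fill2 C {#Comp \<phi> {#In \<psi>#}#} {#})"
      by (rule E_step[where Xr="{#In (DiaArr \<phi> \<psi>)#}", OF diaL.IH[OF diaL.prems(1), unfolded N(1)]])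
         (use diaL.prems(3,4) N in \<open>auto simp: is_nested_def intro: sim_single\<close>)
    show ?thesis unfolding N hy_gx_empty
      by (rule derivable.diaL) (use P1 diaL.prems(4) N in \<open>simp_all add: is_nested_def\<close>)
  qed
next
  case (impL H \<phi> \<psi> G)
  let ?Xr = "{#In (Imp \<phi> \<psi>)#}"
  from locate1[OF impL.prems(2)]
  consider (P) X0 K A where "?Xr = add_mset (In \<xi>) X0" "H = ext K A" "G = ext K (A + X0)"
    | (N) C where "H = hy C {#In \<xi>#}" "G = gx C ?Xr"
    | (Dp) \<eta> C X0 where "?Xr = add_mset (Comp \<eta> (fill C {#In \<xi>#})) X0"
    by auto
  then show ?case
  proof cases
    case Dp then show ?thesis by (auto simp: add_eq_conv_ex)
  next
    case N
    have P2: "derivable False (fill2 C {#In \<psi>#} {#})"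
      by (rule E_step[where Xr="?Xr", OF impL.IH(2)[OF impL.prems(1), unfolded N(1)]])
         (use impL.prems(3,4) N in \<open>auto simp: is_nested_def intro: sim_single\<close>)
    have P1: "derivable False (fill (gx (down2 C) {#In (Imp \<phi> \<psi>), Out \<phi>#}) {#})"
    proof (rule impL.IH(1)[OF impL.prems(1)])
      show "fill (down H) {#In (Imp \<phi> \<psi>), Out \<phi>#} = fill (gx (down2 C) {#In (Imp \<phi> \<psi>), Out \<phi>#}) {#In \<xi>#}"
        using N by simp
      show "derivable False (fill (down (gx (down2 C) {#In (Imp \<phi> \<psi>), Out \<phi>#})) {#Out \<xi>#})"
        using impL.prems(3) N by simp
      show "is_nested (fill (gx (down2 C) {#In (Imp \<phi> \<psi>), Out \<phi>#}) {#})" by (simp add: is_nested_def)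
    qed
    show ?thesis unfolding N hy_gx_empty
      by (rule derivable.impL) (use P1 P2 impL.prems(4) N in \<open>simp_all add: is_nested_def\<close>)
  next
    case P
    then have x: "\<xi> = Imp \<phi> \<psi>" "X0 = {#}" by (auto simp: add_eq_conv_ex)
    then have ab: "\<phi> = a" "\<psi> = b" using xi by auto
    have HG: "H = G" using P x by simp
    have D: "derivable False (fill (down H) {#Out (Imp a b)#})" using impL.prems(3) HG x ab by simp
    have Da: "derivable False (fill (down H) {#Out a#})"
    proof -
      have "derivable False (fill (ext (down H) {#Out \<phi>#}) {#})"
      proof (rule impL.IH(1)[OF impL.prems(1)])
        show "fill (down H) {#In (Imp \<phi> \<psi>), Out \<phi>#} = fill (ext (down H) {#Out \<phi>#}) {#In \<xi>#}"
          using x by (simp add: add_mset_commute)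
        show "derivable False (fill (down (ext (down H) {#Out \<phi>#})) {#Out \<xi>#})" using D x ab by simp
        show "is_nested (fill (ext (down H) {#Out \<phi>#}) {#})" by (simp add: is_nested_def)
      qed
      then show ?thesis using ab by simp
    qed
    have Dab: "derivable False (fill (down H) {#In a, Out b#})"
      using inv_fill[OF D, of "{#In a, Out b#}"] by simp
    have Db: "derivable False (fill (down H) {#Out b#})"
    proof -
      have "derivable False (fill (ext (down H) {#Out b#}) {#})"
      proof (rule CUTD[OF ca])
        show "derivable False (fill (down (ext (down H) {#Out b#})) {#Out a#})" using Da by simp
        show "derivable False (fill (ext (down H) {#Out b#}) {#In a#})" using Dab by (simp add: add_mset_commute)
        show "is_nested (fill (ext (down H) {#Out b#}) {#})" by (simp add: is_nested_def)
      qed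
      then show ?thesis by simp
    qed
    have Eb: "derivable False (fill H {#In b#})" using impL.hyps(2) impL.prems(1) ab by simp
    show ?thesis using CUTD[OF cb Db Eb] impL.prems(4) HG by simp
  qed
next
  case (boxL \<phi> \<eta> H \<psi> \<Delta> G)
  let ?Xr = "{#In (BoxArr \<phi> \<psi>), Comp \<eta> \<Delta>#}"
  have e1: "derivable False {#In \<phi>, Out \<eta>#}" and e2: "derivable False {#In \<eta>, Out \<phi>#}"
    using boxL.hyps(1,2) boxL.prems(1) by auto
  from locate1[OF boxL.prems(2)]
  consider (P) X0 K A where "?Xr = add_mset (In \<xi>) X0" "H = ext K A" "G = ext K (A + X0)"
    | (N) C where "H = hy C {#In \<xi>#}" "G = gx C ?Xr"
    | (Dp) \<eta>' C X0 where "?Xr = add_mset (Comp \<eta>' (fill C {#In \<xi>#})) X0" "G = comp (ext H X0) (Nest {#} \<eta>' C)"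
    by auto
  then show ?case
  proof cases
    case N
    have s: "sim (=) (strip ?Xr) (strip {#In (BoxArr \<phi> \<psi>), Comp \<eta> ({#In \<psi>#} + \<Delta>)#})"
      using sim_comp_wk[of "{#In \<psi>#}" \<eta> "strip \<Delta>" "{#In (BoxArr \<phi> \<psi>)#}"] by (simp add: add_mset_commute)
    have P3: "derivable False (fill2 C {#In (BoxArr \<phi> \<psi>), Comp \<eta> ({#In \<psi>#} + \<Delta>)#} {#})"
      by (rule E_step[where Xr="?Xr", OF boxL.IH(3)[OF boxL.prems(1), unfolded N(1)]])
         (use boxL.prems(3,4) N s in \<open>auto simp: is_nested_def\<close>)
    show ?thesis unfolding N hy_gx_empty
      by (rule derivable.boxL[OF e1 e2]) (use P3 boxL.prems(4) N in \<open>simp_all add: is_nested_def\<close>)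
  next
    case Dp
    then have d: "\<eta>' = \<eta>" "\<Delta> = fill C {#In \<xi>#}" "X0 = {#In (BoxArr \<phi> \<psi>)#}"
      by (auto simp: add_eq_conv_ex)
    let ?G3 = "comp (ext H {#In (BoxArr \<phi> \<psi>)#}) (Nest {#} \<eta> (topadd C {#In \<psi>#}))"
    have P3: "derivable False (fill ?G3 {#})"
    proof (rule boxL.IH(3)[OF boxL.prems(1)])
      show "fill H {#In (BoxArr \<phi> \<psi>), Comp \<eta> ({#In \<psi>#} + \<Delta>)#} = fill ?G3 {#In \<xi>#}"
        using d by (simp add: add_mset_commute)
      have "derivable False (fill (down H) (add_mset (Comp \<eta> (fill (down C) {#Out \<xi>#})) {#In (BoxArr \<phi> \<psi>)#}))"
        using boxL.prems(3) Dp d by (simp add: ac_simps)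
      from wk_comp[OF this, of "{#In \<psi>#}"]
      show "derivable False (fill (down ?G3) {#Out \<xi>#})" by (simp add: ac_simps)
      show "is_nested (fill ?G3 {#})" using boxL.prems(4) Dp d by (simp add: is_nested_def)
    qed
    have GG: "fill G {#} = fill H {#In (BoxArr \<phi> \<psi>), Comp \<eta> (fill C {#})#}" using Dp d by (simp add: add_mset_commute)
    show ?thesis unfolding GG
      by (rule derivable.boxL[OF e1 e2]) (use P3 boxL.prems(4) GG in \<open>simp_all add: is_nested_def ac_simps add_mset_commute\<close>)
  next
    case P
    then have x: "\<xi> = BoxArr \<phi> \<psi>" "X0 = {#Comp \<eta> \<Delta>#}" by (auto simp: add_eq_conv_ex)
    then have ab: "\<phi> = a" "\<psi> = b" using xi by auto
    have G: "G = ext H {#Comp \<eta> \<Delta>#}" using P x by simp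
    have D: "derivable False (fill (down H) {#Comp \<eta> (strip \<Delta>), Out (BoxArr a b)#})"
      using boxL.prems(3) G x ab by (simp add: add_mset_commute)
    have R3: "derivable False (fill H {#Comp \<eta> ({#In b#} + \<Delta>)#})"
    proof -
      have "derivable False (fill (ext H {#Comp \<eta> ({#In \<psi>#} + \<Delta>)#}) {#})"
      proof (rule boxL.IH(3)[OF boxL.prems(1)])
        show "fill H {#In (BoxArr \<phi> \<psi>), Comp \<eta> ({#In \<psi>#} + \<Delta>)#} = fill (ext H {#Comp \<eta> ({#In \<psi>#} + \<Delta>)#}) {#In \<xi>#}"
          using x by (simp add: add_mset_commute)
        show "derivable False (fill (down (ext H {#Comp \<eta> ({#In \<psi>#} + \<Delta>)#})) {#Out \<xi>#})"
          using wk_comp[OF D, of "{#In b#}"] x ab by (simp add: add_mset_commute)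
        show "is_nested (fill (ext H {#Comp \<eta> ({#In \<psi>#} + \<Delta>)#}) {#})"
          using boxL.prems(4) G by (simp add: is_nested_def)
      qed
      then show ?thesis using ab by simp
    qed
    have Dbox: "derivable False (fill (down H) {#Comp a {#Out b#}, Comp \<eta> (strip \<Delta>)#})"
      using inv_fill[OF D[unfolded add_mset_commute[of "Comp \<eta> (strip \<Delta>)"]], of "{#Comp a {#Out b#}#}"]
      by (simp add: add_mset_commute)
    have Dm: "derivable False (fill (down H) {#Comp \<eta> ({#Out b#} + strip \<Delta>)#})"
      by (rule merge_adm[OF ca _ _ Dbox]) (use e1 e2 ab in auto)
    let ?G4 = "comp H (Nest {#} \<eta> (Top \<Delta>))"
    have "derivable False (fill ?G4 {#})"
    proof (rule CUTD[OF cb])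
      show "derivable False (fill (down ?G4) {#Out b#})" using Dm by (simp add: ac_simps)
      show "derivable False (fill ?G4 {#In b#})" using R3 by (simp add: ac_simps)
      show "is_nested (fill ?G4 {#})" using boxL.prems(4) G by (simp add: is_nested_def)
    qed
    then show ?thesis using G by simp
  qed
next
  case (diaR \<phi> \<eta> H \<psi> \<Delta> G)
  let ?Xr = "{#Out (DiaArr \<phi> \<psi>), Comp \<eta> \<Delta>#}"
  have e1: "derivable False {#In \<phi>, Out \<eta>#}" and e2: "derivable False {#In \<eta>, Out \<phi>#}"
    using diaR.hyps(1,2) diaR.prems(1) by auto
  from locate1[OF diaR.prems(2)]
  consider (P) X0 where "?Xr = add_mset (In \<xi>) X0"
    | (N) C where "H = hy C {#In \<xi>#}" "G = gx C ?Xr"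
    | (Dp) \<eta>' C X0 where "?Xr = add_mset (Comp \<eta>' (fill C {#In \<xi>#})) X0" "G = comp (ext H X0) (Nest {#} \<eta>' C)"
    by auto
  then show ?case
  proof cases
    case P then show ?thesis by (auto simp: add_eq_conv_ex)
  next
    case N
    have P3: "derivable False (fill2 C {#Comp \<eta> ({#Out \<psi>#} + \<Delta>)#} {#})"
      by (rule E_step[where Xr="?Xr", OF diaR.IH(3)[OF diaR.prems(1), unfolded N(1)]])
         (use diaR.prems(3,4) N in \<open>auto simp: is_nested_def intro: sim_eq_refl\<close>)
    show ?thesis unfolding N hy_gx_empty
      by (rule derivable.diaR[OF e1 e2]) (use P3 diaR.prems(4) N in \<open>simp_all add: is_nested_def\<close>)
  next
    case Dp
    then have d: "\<eta>' = \<eta>" "\<Delta> = fill C {#In \<xi>#}" "X0 = {#Out (DiaArr \<phi> \<psi>)#}"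
      by (auto simp: add_eq_conv_ex)
    let ?G3 = "comp H (Nest {#} \<eta> (topadd C {#Out \<psi>#}))"
    have P3: "derivable False (fill ?G3 {#})"
    proof (rule diaR.IH(3)[OF diaR.prems(1)])
      show "fill H {#Comp \<eta> ({#Out \<psi>#} + \<Delta>)#} = fill ?G3 {#In \<xi>#}"
        using d by (simp add: ac_simps)
      show "derivable False (fill (down ?G3) {#Out \<xi>#})"
        using diaR.prems(3) Dp d by (simp add: ac_simps)
      show "is_nested (fill ?G3 {#})" using diaR.prems(4) Dp d by (simp add: is_nested_def)
    qed
    have GG: "fill G {#} = fill H {#Out (DiaArr \<phi> \<psi>), Comp \<eta> (fill C {#})#}" using Dp d by (simp add: add_mset_commute)
    show ?thesis unfolding GG
      by (rule derivable.diaR[OF e1 e2]) (use P3 diaR.prems(4) GG in \<open>simp_all add: is_nested_def ac_simps\<close>)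
  qed
next
  case (cut H \<zeta> G)
  then show ?case by simp
qed



lemma nout_empty_strip: "nout M \<Longrightarrow> strip M = {#} \<Longrightarrow> M = {#}"
proof (rule ccontr)
  assume a: "nout M" "strip M = {#}" "M \<noteq> {#}"
  then obtain x where x: "x \<in># M" by (metis multiset_nonemptyE)
  then have "is_out x" using strip_empty_inv[OF a(2)] by blast
  moreover have "\<not> is_out x" using a(1) x unfolding nout_def by blast
  ultimately show False by blast
qed

lemma strip_nout_single_In: "nout X \<Longrightarrow> strip X = {#In a#} \<Longrightarrow> X = {#In a#}"
proof -
  assume n: "nout X" and s: "strip X = {#In a#}"
  from strip_add_inv[of X "In a" "{#}"] s obtain x M' where
    a: "X = add_mset x M'" "strip_item x = In a" "strip M' = {#}" by auto
  have "nout M'" using n a(1) unfolding nout_def by simp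
  then have "M' = {#}" using nout_empty_strip[OF _ a(3)] by blast
  moreover have "x = In a" using strip_item_eq_In[OF a(2)] .
  ultimately show ?thesis using a(1) by simp
qed

lemma strip_nout_In_Comp: "nout X \<Longrightarrow> strip X = {#In a, Comp \<eta> \<Delta>#} \<Longrightarrow> \<exists>\<Delta>'. X = {#In a, Comp \<eta> \<Delta>'#} \<and> strip \<Delta>' = \<Delta>"
proof -
  assume n: "nout X" and s: "strip X = {#In a, Comp \<eta> \<Delta>#}"
  from strip_add_inv[of X "In a" "{#Comp \<eta> \<Delta>#}"] s obtain x M' where
    a: "X = add_mset x M'" "strip_item x = In a" "strip M' = {#Comp \<eta> \<Delta>#}" by auto
  from strip_add_inv[of M' "Comp \<eta> \<Delta>" "{#}"] a(3) obtain x2 M'' where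
    b: "M' = add_mset x2 M''" "strip_item x2 = Comp \<eta> \<Delta>" "strip M'' = {#}" by auto
  have "nout M''" using n a(1) b(1) unfolding nout_def by simp
  then have "M'' = {#}" using nout_empty_strip[OF _ b(3)] by blast
  moreover have "x = In a" using strip_item_eq_In[OF a(2)] .
  moreover obtain \<Delta>' where "x2 = Comp \<eta> \<Delta>'" "strip \<Delta>' = \<Delta>" using strip_item_eq_Comp[OF b(2)] by blast
  ultimately show ?thesis using a(1) b(1) by auto
qed

lemma contr_adm: "derivable False (fill G0 {#In (Atom p), In (Atom p)#}) \<Longrightarrow> derivable False (fill G0 {#In (Atom p)#})"
proof -
  assume d: "derivable False (fill G0 {#In (Atom p), In (Atom p)#})"
  have "sim (=) (add_mset (In (Atom p)) (add_mset (In (Atom p)) {#})) (add_mset (In (Atom p)) {#})"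
    by (rule s_contr) (rule sim_empty_iff)
  then have "sim (=) (fill G0 {#In (Atom p), In (Atom p)#}) (fill G0 {#In (Atom p)#})"
    using sim_fill_mono[of "(=)"] by simp
  then show ?thesis using adm_eq[OF d] by blast
qed

lemma D_step:
  assumes IH: "\<And>G. fill (hy C {#Out \<xi>#}) Xp = fill (down G) {#Out \<xi>#} \<Longrightarrow> derivable False (fill G {#In \<xi>#}) \<Longrightarrow>
     is_nested (fill G {#}) \<Longrightarrow> derivable False (fill G {#})"
  and C: "down2 C' = C" and E: "derivable False (fill2 C' Xr' {#In \<xi>#})"
  and s: "sim (=) Xr' Xp'" and sp: "strip Xp' = Xp" and n: "is_nested (fill2 C' Xp' {#})"
  shows "derivable False (fill2 C' Xp' {#})"
proof -
  have "derivable False (fill (gx C' Xp') {#})"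
  proof (rule IH)
    show "fill (hy C {#Out \<xi>#}) Xp = fill (down (gx C' Xp')) {#Out \<xi>#}" using C sp by simp
    show "derivable False (fill (gx C' Xp') {#In \<xi>#})" using adm_eq[OF E sim_fill2_mono[OF _ s]] by simp
    show "is_nested (fill (gx C' Xp') {#})" using n by simp
  qed
  then show ?thesis by simp
qed


lemma octx_contra: "down G = gx C X \<Longrightarrow> outs X \<noteq> 0 \<Longrightarrow> False"
proof -
  assume a: "down G = gx C X" "outs X \<noteq> 0"
  from a(1) have "octx (down G) = octx (gx C X)" by (rule arg_cong)
  then show False using a(2) by simp
qed

lemma cutD:
  assumes xi: "(\<exists>p. \<xi> = Atom p) \<or> \<xi> = Bot \<or> (\<exists>a b. \<xi> = Disj a b \<and> CUT a \<and> CUT b) \<or> (\<exists>a b. \<xi> = DiaArr a b \<and> CUT a \<and> CUT b)"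
  shows "derivable c S \<Longrightarrow> \<not> c \<Longrightarrow> S = fill (down G) {#Out \<xi>#} \<Longrightarrow> derivable False (fill G {#In \<xi>#}) \<Longrightarrow>
     is_nested (fill G {#}) \<Longrightarrow> derivable False (fill G {#})"
proof (induction arbitrary: G rule: derivable.induct)
  case (init H p G)
  let ?Xr = "{#In (Atom p), Out (Atom p)#}"
  from locate1[OF init.prems(2)]
  consider (P) X0 K A where "?Xr = add_mset (Out \<xi>) X0" "H = ext K A" "down G = ext K (A + X0)"
    | (N) C where "H = hy C {#Out \<xi>#}" "down G = gx C ?Xr"
    | (Dp) \<eta> C X0 where "?Xr = add_mset (Comp \<eta> (fill C {#Out \<xi>#})) X0"
    by auto
  then show ?case
  proof cases
    case N then show ?thesis using octx_contra by fastforce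
  next
    case Dp then show ?thesis by (auto simp: add_eq_conv_ex)
  next
    case P
    then have x: "\<xi> = Atom p" "X0 = {#In (Atom p)#}" by (auto simp: add_eq_conv_ex)
    have "In (Atom p) \<in># hl (down G)" using P(3) x by simp
    then have "In (Atom p) \<in># hl G" using strip_mem_In by simp
    then obtain G0 where G0: "G = ext G0 {#In (Atom p)#}" using hl_mem_ext by blast
    have "derivable False (fill G0 {#In (Atom p), In (Atom p)#})" using init.prems(3) G0 x by simp
    then show ?thesis using contr_adm G0 by simp
  qed
next
  case (botL H G)
  let ?Xr = "{#In Bot#}"
  from locate1[OF botL.prems(2)]
  consider (P) X0 where "?Xr = add_mset (Out \<xi>) X0"
    | (N) C where "H = hy C {#Out \<xi>#}" "down G = gx C ?Xr"
    | (Dp) \<eta> C X0 where "?Xr = add_mset (Comp \<eta> (fill C {#Out \<xi>#})) X0"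
    by auto
  then show ?case
  proof cases
    case P then show ?thesis by (auto simp: add_eq_conv_ex)
  next
    case Dp then show ?thesis by (auto simp: add_eq_conv_ex)
  next
    case N
    from L_gx[OF N(2)] obtain C' X' where l: "G = gx C' X'" "down2 C' = C" "strip X' = ?Xr" "nout X'" by blast
    have X': "X' = ?Xr" using strip_nout_single_In[OF l(4) l(3)] .
    show ?thesis unfolding l(1) X' hy_gx_empty
      by (rule derivable.botL) (use botL.prems(4) l X' in \<open>simp add: is_nested_def\<close>)
  qed
next
  case (conjL H \<phi> \<psi> G)
  let ?Xr = "{#In (Conj \<phi> \<psi>)#}"
  from locate1[OF conjL.prems(2)]
  consider (P) X0 where "?Xr = add_mset (Out \<xi>) X0"
    | (N) C where "H = hy C {#Out \<xi>#}" "down G = gx C ?Xr"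
    | (Dp) \<eta> C X0 where "?Xr = add_mset (Comp \<eta> (fill C {#Out \<xi>#})) X0"
    by auto
  then show ?case
  proof cases
    case P then show ?thesis by (auto simp: add_eq_conv_ex)
  next
    case Dp then show ?thesis by (auto simp: add_eq_conv_ex)
  next
    case N
    from L_gx[OF N(2)] obtain C' X' where l: "G = gx C' X'" "down2 C' = C" "strip X' = ?Xr" "nout X'" by blast
    have X': "X' = ?Xr" using strip_nout_single_In[OF l(4) l(3)] .
    have P1: "derivable False (fill2 C' {#In \<phi>, In \<psi>#} {#})"
      by (rule D_step[OF conjL.IH[OF conjL.prems(1), unfolded N(1)] l(2), where Xr'="?Xr"])
         (use conjL.prems(3,4) l X' in \<open>auto simp: is_nested_def intro: sim_single\<close>)
    show ?thesis unfolding l(1) X' hy_gx_empty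
      by (rule derivable.conjL) (use P1 conjL.prems(4) l X' in \<open>simp_all add: is_nested_def\<close>)
  qed
next
  case (disjL H \<phi> \<psi> G)
  let ?Xr = "{#In (Disj \<phi> \<psi>)#}"
  from locate1[OF disjL.prems(2)]
  consider (P) X0 where "?Xr = add_mset (Out \<xi>) X0"
    | (N) C where "H = hy C {#Out \<xi>#}" "down G = gx C ?Xr"
    | (Dp) \<eta> C X0 where "?Xr = add_mset (Comp \<eta> (fill C {#Out \<xi>#})) X0"
    by auto
  then show ?case
  proof cases
    case P then show ?thesis by (auto simp: add_eq_conv_ex)
  next
    case Dp then show ?thesis by (auto simp: add_eq_conv_ex)
  next
    case N
    from L_gx[OF N(2)] obtain C' X' where l: "G = gx C' X'" "down2 C' = C" "strip X' = ?Xr" "nout X'" by blast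
    have X': "X' = ?Xr" using strip_nout_single_In[OF l(4) l(3)] .
    have P1: "derivable False (fill2 C' {#In \<phi>#} {#})"
      by (rule D_step[OF disjL.IH(1)[OF disjL.prems(1), unfolded N(1)] l(2), where Xr'="?Xr"])
         (use disjL.prems(3,4) l X' in \<open>auto simp: is_nested_def intro: sim_single\<close>)
    have P2: "derivable False (fill2 C' {#In \<psi>#} {#})"
      by (rule D_step[OF disjL.IH(2)[OF disjL.prems(1), unfolded N(1)] l(2), where Xr'="?Xr"])
         (use disjL.prems(3,4) l X' in \<open>auto simp: is_nested_def intro: sim_single\<close>)
    show ?thesis unfolding l(1) X' hy_gx_empty
      by (rule derivable.disjL) (use P1 P2 disjL.prems(4) l X' in \<open>simp_all add: is_nested_def\<close>)
  qed
next
  case (diaL H \<phi> \<psi> G)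
  let ?Xr = "{#In (DiaArr \<phi> \<psi>)#}"
  from locate1[OF diaL.prems(2)]
  consider (P) X0 where "?Xr = add_mset (Out \<xi>) X0"
    | (N) C where "H = hy C {#Out \<xi>#}" "down G = gx C ?Xr"
    | (Dp) \<eta> C X0 where "?Xr = add_mset (Comp \<eta> (fill C {#Out \<xi>#})) X0"
    by auto
  then show ?case
  proof cases
    case P then show ?thesis by (auto simp: add_eq_conv_ex)
  next
    case Dp then show ?thesis by (auto simp: add_eq_conv_ex)
  next
    case N
    from L_gx[OF N(2)] obtain C' X' where l: "G = gx C' X'" "down2 C' = C" "strip X' = ?Xr" "nout X'" by blast
    have X': "X' = ?Xr" using strip_nout_single_In[OF l(4) l(3)] .
    have P1: "derivable False (fill2 C' {#Comp \<phi> {#In \<psi>#}#} {#})"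
      by (rule D_step[OF diaL.IH[OF diaL.prems(1), unfolded N(1)] l(2), where Xr'="?Xr"])
         (use diaL.prems(3,4) l X' in \<open>auto simp: is_nested_def intro: sim_single\<close>)
    show ?thesis unfolding l(1) X' hy_gx_empty
      by (rule derivable.diaL) (use P1 diaL.prems(4) l X' in \<open>simp_all add: is_nested_def\<close>)
  qed
next
  case (impL H \<phi> \<psi> G)
  let ?Xr = "{#In (Imp \<phi> \<psi>)#}"
  from locate1[OF impL.prems(2)]
  consider (P) X0 where "?Xr = add_mset (Out \<xi>) X0"
    | (N) C where "H = hy C {#Out \<xi>#}" "down G = gx C ?Xr"
    | (Dp) \<eta> C X0 where "?Xr = add_mset (Comp \<eta> (fill C {#Out \<xi>#})) X0"
    by auto
  then show ?case
  proof cases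
    case P then show ?thesis by (auto simp: add_eq_conv_ex)
  next
    case Dp then show ?thesis by (auto simp: add_eq_conv_ex)
  next
    case N
    from L_gx[OF N(2)] obtain C' X' where l: "G = gx C' X'" "down2 C' = C" "strip X' = ?Xr" "nout X'" by blast
    have X': "X' = ?Xr" using strip_nout_single_In[OF l(4) l(3)] .
    have P2: "derivable False (fill2 C' {#In \<psi>#} {#})"
      by (rule D_step[OF impL.IH(2)[OF impL.prems(1), unfolded N(1)] l(2), where Xr'="?Xr"])
         (use impL.prems(3,4) l X' in \<open>auto simp: is_nested_def intro: sim_single\<close>)
    have P1: "derivable False (fill (down H) {#In (Imp \<phi> \<psi>), Out \<phi>#})" using impL.hyps(1) impL.prems(1) by simp
    have P1': "derivable False (fill (down (hy C' {#})) {#In (Imp \<phi> \<psi>), Out \<phi>#})"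
    proof -
      have dC: "down2 C = C" using l(2) by (metis down2_down2)
      show ?thesis using P1 N(1) l(2) dC by simp
    qed
    show ?thesis unfolding l(1) X' hy_gx_empty
      by (rule derivable.impL[OF P1']) (use P2 impL.prems(4) l X' o2_down2[of C'] in \<open>simp_all add: is_nested_def\<close>)
  qed
next
  case (conjR H \<phi> \<psi> G)
  let ?Xr = "{#Out (Conj \<phi> \<psi>)#}"
  from locate1[OF conjR.prems(2)]
  consider (P) X0 where "?Xr = add_mset (Out \<xi>) X0"
    | (N) C where "H = hy C {#Out \<xi>#}" "down G = gx C ?Xr"
    | (Dp) \<eta> C X0 where "?Xr = add_mset (Comp \<eta> (fill C {#Out \<xi>#})) X0"
    by auto
  then show ?case
  proof cases
    case P then show ?thesis using xi by (auto simp: add_eq_conv_ex)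
  next
    case Dp then show ?thesis by (auto simp: add_eq_conv_ex)
  next
    case N then show ?thesis using octx_contra by fastforce
  qed
next
  case (impR H \<phi> \<psi> G)
  let ?Xr = "{#Out (Imp \<phi> \<psi>)#}"
  from locate1[OF impR.prems(2)]
  consider (P) X0 where "?Xr = add_mset (Out \<xi>) X0"
    | (N) C where "H = hy C {#Out \<xi>#}" "down G = gx C ?Xr"
    | (Dp) \<eta> C X0 where "?Xr = add_mset (Comp \<eta> (fill C {#Out \<xi>#})) X0"
    by auto
  then show ?case
  proof cases
    case P then show ?thesis using xi by (auto simp: add_eq_conv_ex)
  next
    case Dp then show ?thesis by (auto simp: add_eq_conv_ex)
  next
    case N then show ?thesis using octx_contra by fastforce
  qed
next
  case (boxR H \<phi> \<psi> G)
  let ?Xr = "{#Out (BoxArr \<phi> \<psi>)#}"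
  from locate1[OF boxR.prems(2)]
  consider (P) X0 where "?Xr = add_mset (Out \<xi>) X0"
    | (N) C where "H = hy C {#Out \<xi>#}" "down G = gx C ?Xr"
    | (Dp) \<eta> C X0 where "?Xr = add_mset (Comp \<eta> (fill C {#Out \<xi>#})) X0"
    by auto
  then show ?case
  proof cases
    case P then show ?thesis using xi by (auto simp: add_eq_conv_ex)
  next
    case Dp then show ?thesis by (auto simp: add_eq_conv_ex)
  next
    case N then show ?thesis using octx_contra by fastforce
  qed
next
  case (disjR1 H \<phi> \<psi> G)
  let ?Xr = "{#Out (Disj \<phi> \<psi>)#}"
  from locate1[OF disjR1.prems(2)]
  consider (P) X0 K A where "?Xr = add_mset (Out \<xi>) X0" "H = ext K A" "down G = ext K (A + X0)"
    | (N) C where "H = hy C {#Out \<xi>#}" "down G = gx C ?Xr"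
    | (Dp) \<eta> C X0 where "?Xr = add_mset (Comp \<eta> (fill C {#Out \<xi>#})) X0"
    by auto
  then show ?case
  proof cases
    case Dp then show ?thesis by (auto simp: add_eq_conv_ex)
  next
    case N then show ?thesis using octx_contra by fastforce
  next
    case P
    then have x: "\<xi> = Disj \<phi> \<psi>" "X0 = {#}" by (auto simp: add_eq_conv_ex)
    then have ca: "CUT \<phi>" using xi by auto
    have D: "derivable False (fill (down G) {#Out \<phi>#})" using disjR1.hyps(1) disjR1.prems(1) P x by simp
    have E: "derivable False (fill G {#In \<phi>#})" using inv_fill[OF disjR1.prems(3), of "{#In \<phi>#}"] x by simp
    show ?thesis by (rule CUTD[OF ca D E disjR1.prems(4)])
  qed
next
  case (disjR2 H \<psi> \<phi> G)
  let ?Xr = "{#Out (Disj \<phi> \<psi>)#}"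
  from locate1[OF disjR2.prems(2)]
  consider (P) X0 K A where "?Xr = add_mset (Out \<xi>) X0" "H = ext K A" "down G = ext K (A + X0)"
    | (N) C where "H = hy C {#Out \<xi>#}" "down G = gx C ?Xr"
    | (Dp) \<eta> C X0 where "?Xr = add_mset (Comp \<eta> (fill C {#Out \<xi>#})) X0"
    by auto
  then show ?case
  proof cases
    case Dp then show ?thesis by (auto simp: add_eq_conv_ex)
  next
    case N then show ?thesis using octx_contra by fastforce
  next
    case P
    then have x: "\<xi> = Disj \<phi> \<psi>" "X0 = {#}" by (auto simp: add_eq_conv_ex)
    then have ca: "CUT \<psi>" using xi by auto
    have D: "derivable False (fill (down G) {#Out \<psi>#})" using disjR2.hyps(1) disjR2.prems(1) P x by simp
    have E: "derivable False (fill G {#In \<psi>#})" using inv_fill[OF disjR2.prems(3), of "{#In \<psi>#}"] x by simp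
    show ?thesis by (rule CUTD[OF ca D E disjR2.prems(4)])
  qed
next
  case (boxL \<phi> \<eta> H \<psi> \<Delta> G)
  let ?Xr = "{#In (BoxArr \<phi> \<psi>), Comp \<eta> \<Delta>#}"
  have e1: "derivable False {#In \<phi>, Out \<eta>#}" and e2: "derivable False {#In \<eta>, Out \<phi>#}"
    using boxL.hyps(1,2) boxL.prems(1) by auto
  from locate1[OF boxL.prems(2)]
  consider (P) X0 where "?Xr = add_mset (Out \<xi>) X0"
    | (N) C where "H = hy C {#Out \<xi>#}" "down G = gx C ?Xr"
    | (Dp) \<eta>' C X0 where "?Xr = add_mset (Comp \<eta>' (fill C {#Out \<xi>#})) X0" "down G = comp (ext H X0) (Nest {#} \<eta>' C)"
    by auto
  then show ?case
  proof cases
    case P then show ?thesis by (auto simp: add_eq_conv_ex)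
  next
    case N
    from L_gx[OF N(2)] obtain C' X' where l: "G = gx C' X'" "down2 C' = C" "strip X' = ?Xr" "nout X'" by blast
    obtain \<Delta>' where X': "X' = {#In (BoxArr \<phi> \<psi>), Comp \<eta> \<Delta>'#}" "strip \<Delta>' = \<Delta>"
      using strip_nout_In_Comp[OF l(4) l(3)] by blast
    have s: "sim (=) X' {#In (BoxArr \<phi> \<psi>), Comp \<eta> ({#In \<psi>#} + \<Delta>')#}"
      using sim_comp_wk[of "{#In \<psi>#}" \<eta> \<Delta>' "{#In (BoxArr \<phi> \<psi>)#}"] X'(1) by (simp add: add_mset_commute)
    have P3: "derivable False (fill2 C' {#In (BoxArr \<phi> \<psi>), Comp \<eta> ({#In \<psi>#} + \<Delta>')#} {#})"
    proof (rule D_step[OF boxL.IH(3)[OF boxL.prems(1), unfolded N(1)] l(2) _ s])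
      show "derivable False (fill2 C' X' {#In \<xi>#})" using boxL.prems(3) l(1) by simp
      show "strip {#In (BoxArr \<phi> \<psi>), Comp \<eta> ({#In \<psi>#} + \<Delta>')#} = {#In (BoxArr \<phi> \<psi>), Comp \<eta> ({#In \<psi>#} + \<Delta>)#}"
        using X'(2) by simp
      show "is_nested (fill2 C' {#In (BoxArr \<phi> \<psi>), Comp \<eta> ({#In \<psi>#} + \<Delta>')#} {#})"
        using boxL.prems(4) l(1) X' by (simp add: is_nested_def)
    qed
    show ?thesis unfolding l(1) X'(1) hy_gx_empty
      by (rule derivable.boxL[OF e1 e2]) (use P3 boxL.prems(4) l X' in \<open>simp_all add: is_nested_def\<close>)
  next
    case Dp
    then have d: "\<eta>' = \<eta>" "\<Delta> = fill C {#Out \<xi>#}" "X0 = {#In (BoxArr \<phi> \<psi>)#}"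
      by (auto simp: add_eq_conv_ex)
    from L_deep[OF Dp(2)] obtain H' X0' C0' where l: "G = comp (ext H' X0') (Nest {#} \<eta>' C0')"
      "down H' = H" "strip X0' = X0" "nout X0'" "down C0' = C" by blast
    have X0': "X0' = {#In (BoxArr \<phi> \<psi>)#}" using strip_nout_single_In[OF l(4)] l(3) d(3) by simp
    let ?G3 = "comp (ext H' {#In (BoxArr \<phi> \<psi>)#}) (Nest {#} \<eta> (topadd C0' {#In \<psi>#}))"
    have P3: "derivable False (fill ?G3 {#})"
    proof (rule boxL.IH(3)[OF boxL.prems(1)])
      show "fill H {#In (BoxArr \<phi> \<psi>), Comp \<eta> ({#In \<psi>#} + \<Delta>)#} = fill (down ?G3) {#Out \<xi>#}"
        using d l(2,5) by (simp add: add_mset_commute ac_simps)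
      have "derivable False (fill H' (add_mset (Comp \<eta> (fill C0' {#In \<xi>#})) {#In (BoxArr \<phi> \<psi>)#}))"
        using boxL.prems(3) l(1) X0' d by (simp add: ac_simps)
      from wk_comp[OF this, of "{#In \<psi>#}"]
      show "derivable False (fill ?G3 {#In \<xi>#})" by (simp add: ac_simps)
      show "is_nested (fill ?G3 {#})" using boxL.prems(4) l(1) X0' d by (simp add: is_nested_def)
    qed
    have GG: "fill G {#} = fill H' {#In (BoxArr \<phi> \<psi>), Comp \<eta> (fill C0' {#})#}"
      using l(1) X0' d by (simp add: add_mset_commute)
    show ?thesis unfolding GG
      by (rule derivable.boxL[OF e1 e2]) (use P3 boxL.prems(4) GG in \<open>simp_all add: is_nested_def ac_simps add_mset_commute\<close>)
  qed
next
  case (diaR \<phi> \<eta> H \<psi> \<Delta> G)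
  let ?Xr = "{#Out (DiaArr \<phi> \<psi>), Comp \<eta> \<Delta>#}"
  have e1: "derivable False {#In \<phi>, Out \<eta>#}" and e2: "derivable False {#In \<eta>, Out \<phi>#}"
    using diaR.hyps(1,2) diaR.prems(1) by auto
  from locate1[OF diaR.prems(2)]
  consider (P) X0 K A where "?Xr = add_mset (Out \<xi>) X0" "H = ext K A" "down G = ext K (A + X0)"
    | (N) C where "H = hy C {#Out \<xi>#}" "down G = gx C ?Xr"
    | (Dp) \<eta>' C X0 where "?Xr = add_mset (Comp \<eta>' (fill C {#Out \<xi>#})) X0" "down G = comp (ext H X0) (Nest {#} \<eta>' C)"
    by auto
  then show ?case
  proof cases
    case N then show ?thesis using octx_contra by fastforce
  next
    case Dp
    then have "X0 = {#Out (DiaArr \<phi> \<psi>)#}" by (auto simp: add_eq_conv_ex)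
    moreover have "octx (down G) = octx (comp (ext H X0) (Nest {#} \<eta>' C))" using Dp(2) by (rule arg_cong)
    ultimately show ?thesis by simp
  next
    case P
    then have x: "\<xi> = DiaArr \<phi> \<psi>" "X0 = {#Comp \<eta> \<Delta>#}" by (auto simp: add_eq_conv_ex)
    then have ca: "CUT \<phi>" and cb: "CUT \<psi>" using xi by auto
    have "Comp \<eta> \<Delta> \<in># hl (down G)" using P(3) x by simp
    then obtain \<Delta>' where m: "Comp \<eta> \<Delta>' \<in># hl G" "strip \<Delta>' = \<Delta>" using strip_mem_Comp by fastforce
    then obtain G0 where G0: "G = ext G0 {#Comp \<eta> \<Delta>'#}" using hl_mem_ext by blast
    have "ext (down G0) (add_mset (Comp \<eta> \<Delta>) {#}) = ext K (add_mset (Comp \<eta> \<Delta>) A)"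
      using P(3) x G0 m(2) by simp
    then have dG0: "down G0 = H" using ext_cancel P(2) by fastforce
    have E: "derivable False (fill G0 (add_mset (In (DiaArr \<phi> \<psi>)) {#Comp \<eta> \<Delta>'#}))"
      using diaR.prems(3) G0 x by (simp add: ac_simps)
    have E1: "derivable False (fill G0 {#Comp \<phi> {#In \<psi>#}, Comp \<eta> \<Delta>'#})"
      using inv_fill[OF E, of "{#Comp \<phi> {#In \<psi>#}#}"] by (simp add: add_mset_commute)
    have E2: "derivable False (fill G0 {#Comp \<eta> ({#In \<psi>#} + \<Delta>')#})"
      by (rule merge_adm[OF ca e1 e2 E1])
    let ?G4 = "comp G0 (Nest {#} \<eta> (Top \<Delta>'))"
    have "derivable False (fill ?G4 {#})"
    proof (rule CUTD[OF cb])
      show "derivable False (fill (down ?G4) {#Out \<psi>#})"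
        using diaR.hyps(3) diaR.prems(1) dG0 m(2) by (simp add: ac_simps)
      show "derivable False (fill ?G4 {#In \<psi>#})" using E2 by (simp add: ac_simps)
      show "is_nested (fill ?G4 {#})" using diaR.prems(4) G0 by (simp add: is_nested_def)
    qed
    then show ?thesis using G0 by simp
  qed
next
  case (cut H \<zeta> G)
  then show ?case by simp
qed


lemma CUT_all: "CUT \<xi>"
proof (induction \<xi>)
  case (Atom p)
  show ?case unfolding CUT_def
    by (intro allI impI, rule cutD[of "Atom p", OF _ _ _ refl]) auto
next
  case Bot
  show ?case unfolding CUT_def
    by (intro allI impI, rule cutD[of Bot, OF _ _ _ refl]) auto
next
  case (Conj a b)
  then show ?case by (rule cut_conj)
next
  case (Disj a b)
  show ?case unfolding CUT_def
    by (intro allI impI, rule cutD[of "Disj a b", OF _ _ _ refl]) (use Disj in auto)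
next
  case (DiaArr a b)
  show ?case unfolding CUT_def
    by (intro allI impI, rule cutD[of "DiaArr a b", OF _ _ _ refl]) (use DiaArr in auto)
next
  case (Imp a b)
  show ?case unfolding CUT_def
    by (intro allI impI, rule cutE[of a b "Imp a b", OF _ _ _ _ _ refl]) (use Imp in auto)
next
  case (BoxArr a b)
  show ?case unfolding CUT_def
    by (intro allI impI, rule cutE[of a b "BoxArr a b", OF _ _ _ _ _ refl]) (use BoxArr in auto)
qed

theorem theorem2:
  fixes \<Gamma> :: "'a seq"
  assumes "derivable True \<Gamma>"
  shows "derivable False \<Gamma>"
  using assms
proof (induction rule: derivable.induct)
  case (cut G \<xi>)
  then show ?case using CUTD[OF CUT_all] by blast
qed (auto intro: derivable.intros)


end
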